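(* Assume $\mathrm{add}(\mathcal M)=\mathfrak c$ (e.g. assume CH). Then there exists an $\mathrm{add}(\mathcal M)$-Luzin set $L\subseteq[\mathbb N]^\infty$ which satisfies $\mathrm{Split}(B_\Lambda,B_\Lambda)$ but does not satisfy $\mathrm{Split}(C_\Omega,C_\Omega)$.
   Context: $[\mathbb N]^\infty$ is the set of infinite subsets of $\mathbb N$, a subspace of $P(\mathbb N)$ identified with the Cantor space $\{0,1\}^{\mathbb N}$. $\mathcal M$ is the ideal of meager sets; $\mathrm{add}(\mathcal M)$ is the least cardinality of a family of meager sets of reals whose union is not meager; $\mathfrak c=2^{\aleph_0}$. For an uncountable cardinal $\kappa$, a $\kappa$-Luzin set is a set $L$ with $|L|\ge\kappa$ such that $|L\cap M|<\kappa$ for every meager set $M$ (of the ambient space). A cover of a space $X$ is a family $\mathcal U$ of subsets of $X$ with $\bigcup\mathcal U=X$ such that $X\not\subseteq U$ for every $U\in\mathcal U$; it is a large cover if every $x\in X$ lies in infinitely many members, and an $\omega$-cover if every finite subset of $X$ is contained in some member. $B_\Lambda$ is the collection of countable large covers of $X$ by Borel sets; $C_\Omega$ is the collection of countable $\omega$-covers of $X$ by clopen sets. $X$ satisfies $\mathrm{Split}(\mathfrak U,\mathfrak V)$ if every $\mathcal U\in\mathfrak U$ can be partitioned into two disjoint subfamilies each containing a subfamily belonging to $\mathfrak V$. *)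

theory Defs
  imports "HOL-Analysis.Analysis"
begin

text \<open>P(N) identified with the Cantor space {0,1}^N via characteristic functions:
  the topology on nat set is the pullback of the product of discrete two-point spaces.\<close>
definition cantor_top :: "nat set topology" where
  "cantor_top = pullback_topology UNIV (\<lambda>A i. i \<in> A)
      (product_topology (\<lambda>_::nat. discrete_topology (UNIV :: bool set)) UNIV)"

definition nowhere_dense :: "nat set set \<Rightarrow> bool" where
  "nowhere_dense S \<longleftrightarrow> cantor_top interior_of (cantor_top closure_of S) = {}"

definition meager :: "nat set set \<Rightarrow> bool" where
  "meager S \<longleftrightarrow> (\<exists>\<N>. countable \<N> \<and> (\<forall>N\<in>\<N>. nowhere_dense N) \<and> S \<subseteq> \<Union>\<N>)"

definition nonmeager_unions :: "nat set set set set" where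
  "nonmeager_unions = {F. (\<forall>M\<in>F. meager M) \<and> \<not> meager (\<Union>F)}"

text \<open>is_addM K: the cardinality of K is add(M), the least cardinality of a
  family of meager sets whose union is not meager.\<close>
definition is_addM :: "'a set \<Rightarrow> bool" where
  "is_addM K \<longleftrightarrow> (\<exists>F\<in>nonmeager_unions. (card_of F, card_of K) \<in> ordIso) \<and> (\<forall>F\<in>nonmeager_unions. (card_of K, card_of F) \<in> ordLeq)"

text \<open>kappa-Luzin set (kappa = |K|) in the ambient space P(N).\<close>
definition luzin :: "'a set \<Rightarrow> nat set set \<Rightarrow> bool" where
  "luzin K L \<longleftrightarrow> (card_of K, card_of L) \<in> ordLeq \<and> (\<forall>M. meager M \<longrightarrow> (card_of (L \<inter> M), card_of K) \<in> ordLess)"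

definition infinite_subsets :: "nat set set" where
  "infinite_subsets = {A. infinite A}"

definition is_cover :: "nat set set \<Rightarrow> nat set set set \<Rightarrow> bool" where
  "is_cover X \<U> \<longleftrightarrow> (\<forall>U\<in>\<U>. U \<subseteq> X) \<and> \<Union>\<U> = X \<and> (\<forall>U\<in>\<U>. \<not> X \<subseteq> U)"

definition large_cover :: "nat set set \<Rightarrow> nat set set set \<Rightarrow> bool" where
  "large_cover X \<U> \<longleftrightarrow> is_cover X \<U> \<and> (\<forall>x\<in>X. infinite {U\<in>\<U>. x \<in> U})"

definition omega_cover :: "nat set set \<Rightarrow> nat set set set \<Rightarrow> bool" where
  "omega_cover X \<U> \<longleftrightarrow> is_cover X \<U> \<and> (\<forall>F. finite F \<and> F \<subseteq> X \<longrightarrow> (\<exists>U\<in>\<U>. F \<subseteq> U))"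

definition borel_in :: "nat set set \<Rightarrow> nat set set set" where
  "borel_in X = sigma_sets X {U. openin (subtopology cantor_top X) U}"

definition clopen_in :: "nat set set \<Rightarrow> nat set set \<Rightarrow> bool" where
  "clopen_in X U \<longleftrightarrow> openin (subtopology cantor_top X) U \<and> closedin (subtopology cantor_top X) U"

definition B_Lambda :: "nat set set \<Rightarrow> nat set set set set" where
  "B_Lambda X = {\<U>. countable \<U> \<and> large_cover X \<U> \<and> \<U> \<subseteq> borel_in X}"

definition C_Omega :: "nat set set \<Rightarrow> nat set set set set" where
  "C_Omega X = {\<U>. countable \<U> \<and> omega_cover X \<U> \<and> (\<forall>U\<in>\<U>. clopen_in X U)}"

definition Split :: "(nat set set \<Rightarrow> nat set set set set) \<Rightarrow> (nat set set \<Rightarrow> nat set set set set)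
    \<Rightarrow> nat set set \<Rightarrow> bool" where
  "Split \<UU> \<VV> X \<longleftrightarrow> (\<forall>\<U>\<in>\<UU> X. \<exists>\<A> \<B>. \<A> \<union> \<B> = \<U> \<and> \<A> \<inter> \<B> = {} \<and>
      (\<exists>\<A>'\<subseteq>\<A>. \<A>' \<in> \<VV> X) \<and> (\<exists>\<B>'\<subseteq>\<B>. \<B>' \<in> \<VV> X))"

end

theory Submission
  imports Defs
begin

unbundle cardinal_syntax


definition cyl :: "nat set \<Rightarrow> nat \<Rightarrow> nat set set" where
  "cyl y m = {z. \<forall>i<m. (i \<in> z) = (i \<in> y)}"

lemma topspace_cantor[simp]: "topspace cantor_top = UNIV"
  by (simp add: cantor_top_def topspace_pullback_topology)

lemma cyl_self[simp]: "y \<in> cyl y m"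
  by (simp add: cyl_def)

lemma cyl_mono: "m \<le> m' \<Longrightarrow> cyl y m' \<subseteq> cyl y m"
  by (auto simp: cyl_def)

lemma cyl_eq: "z \<in> cyl y m \<Longrightarrow> cyl z m = cyl y m"
  by (auto simp: cyl_def)

lemma cyl_sub: "z \<in> cyl y m \<Longrightarrow> m \<le> m' \<Longrightarrow> cyl z m' \<subseteq> cyl y m"
  using cyl_eq cyl_mono by blast

lemma openin_cyl: "openin cantor_top (cyl y m)"
proof -
  define S where "S = (\<lambda>i::nat. if i < m then {i \<in> y} else (UNIV::bool set))"
  have "openin (product_topology (\<lambda>_::nat. discrete_topology (UNIV :: bool set)) UNIV) (PiE UNIV S)"
  proof -
    have "{i. S i \<noteq> UNIV} \<subseteq> {..<m}" by (auto simp: S_def)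
    hence "finite {i \<in> UNIV. S i \<noteq> topspace (discrete_topology UNIV)}"
      by (simp add: finite_subset)
    thus ?thesis by (subst openin_PiE_gen) auto
  qed
  moreover have "cyl y m = (\<lambda>A i. i \<in> A) -` (PiE UNIV S) \<inter> UNIV"
  proof (intro set_eqI iffI)
    fix z assume "z \<in> cyl y m"
    thus "z \<in> (\<lambda>A i. i \<in> A) -` (PiE UNIV S) \<inter> UNIV"
      by (auto simp: cyl_def S_def PiE_def extensional_def)
  next
    fix z assume z: "z \<in> (\<lambda>A i. i \<in> A) -` (PiE UNIV S) \<inter> UNIV"
    { fix i assume "i < m"
      have "(i \<in> z) \<in> S i" using z by (simp add: PiE_def Pi_def)
      hence "(i \<in> z) = (i \<in> y)" using \<open>i < m\<close> by (simp add: S_def) }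
    thus "z \<in> cyl y m" by (simp add: cyl_def)
  qed
  ultimately show ?thesis unfolding cantor_top_def openin_pullback_topology by blast
qed

lemma openin_cantor_iff: "openin cantor_top G \<longleftrightarrow> (\<forall>y\<in>G. \<exists>m. cyl y m \<subseteq> G)"
proof
  assume "openin cantor_top G"
  then obtain U where U: "openin (product_topology (\<lambda>_::nat. discrete_topology (UNIV :: bool set)) UNIV) U"
    and G: "G = (\<lambda>A i. i \<in> A) -` U \<inter> UNIV"
    unfolding cantor_top_def openin_pullback_topology by blast
  show "\<forall>y\<in>G. \<exists>m. cyl y m \<subseteq> G"
  proof
    fix y assume "y \<in> G"
    hence "(\<lambda>i. i \<in> y) \<in> U" using G by auto
    from product_topology_open_contains_basis[OF U this] obtain X where
      X: "(\<lambda>i. i \<in> y) \<in> (\<Pi>\<^sub>E i\<in>UNIV. X i)" "finite {i. X i \<noteq> topspace (discrete_topology UNIV)}"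
         "(\<Pi>\<^sub>E i\<in>UNIV. X i) \<subseteq> U" by blast
    obtain m where m: "\<forall>i\<in>{i. X i \<noteq> UNIV}. i < m"
      using X(2) finite_nat_bounded by (metis topspace_discrete_topology lessThan_iff subset_eq)
    have "cyl y m \<subseteq> G"
    proof
      fix z assume z: "z \<in> cyl y m"
      have "(\<lambda>i. i \<in> z) \<in> (\<Pi>\<^sub>E i\<in>UNIV. X i)"
      proof (rule PiE_I)
        fix i assume "i \<in> (UNIV::nat set)" show "(i \<in> z) \<in> X i"
        proof (cases "i < m")
          case True then show ?thesis using z X(1) by (auto simp: cyl_def)
        next
          case False then show ?thesis using m by auto
        qed
      qed simp
      thus "z \<in> G" using X(3) G by auto
    qed
    thus "\<exists>m. cyl y m \<subseteq> G" by blast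
  qed
next
  assume "\<forall>y\<in>G. \<exists>m. cyl y m \<subseteq> G"
  thus "openin cantor_top G"
    by (subst openin_subopen) (meson cyl_self openin_cyl)
qed


lemma nd_iff: "nowhere_dense S \<longleftrightarrow> (\<forall>y m. \<exists>z m'. m \<le> m' \<and> z \<in> cyl y m \<and> cyl z m' \<inter> S = {})"
proof
  assume nd: "nowhere_dense S"
  show "\<forall>y m. \<exists>z m'. m \<le> m' \<and> z \<in> cyl y m \<and> cyl z m' \<inter> S = {}"
  proof (intro allI)
    fix y m
    have "\<not> cyl y m \<subseteq> cantor_top closure_of S"
    proof
      assume "cyl y m \<subseteq> cantor_top closure_of S"
      hence "cyl y m \<subseteq> cantor_top interior_of (cantor_top closure_of S)"
        using interior_of_maximal openin_cyl by blast
      thus False using nd cyl_self unfolding nowhere_dense_def by blast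
    qed
    then obtain z where z: "z \<in> cyl y m" "z \<notin> cantor_top closure_of S" by blast
    then obtain T where T: "z \<in> T" "openin cantor_top T" "\<forall>w. w \<in> S \<longrightarrow> w \<notin> T"
      by (auto simp: in_closure_of)
    then obtain m1 where m1: "cyl z m1 \<subseteq> T" using openin_cantor_iff by blast
    have "cyl z (max m m1) \<subseteq> T" using m1 cyl_mono[of m1 "max m m1" z] by auto
    hence "cyl z (max m m1) \<inter> S = {}" using T by blast
    thus "\<exists>z m'. m \<le> m' \<and> z \<in> cyl y m \<and> cyl z m' \<inter> S = {}" using z(1)
      by (intro exI[of _ z] exI[of _ "max m m1"]) auto
  qed
next
  assume H: "\<forall>y m. \<exists>z m'. m \<le> m' \<and> z \<in> cyl y m \<and> cyl z m' \<inter> S = {}"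
  show "nowhere_dense S" unfolding nowhere_dense_def
  proof (rule ccontr)
    assume "cantor_top interior_of (cantor_top closure_of S) \<noteq> {}"
    then obtain x T where T: "openin cantor_top T" "x \<in> T" "T \<subseteq> cantor_top closure_of S"
      by (auto simp: interior_of_def)
    then obtain m where m: "cyl x m \<subseteq> T" using openin_cantor_iff by blast
    obtain z m' where z: "m \<le> m'" "z \<in> cyl x m" "cyl z m' \<inter> S = {}" using H by blast
    have "z \<in> cantor_top closure_of S" using z m T cyl_self by blast
    hence "\<exists>w. w \<in> S \<and> w \<in> cyl z m'" using openin_cyl[of z m'] cyl_self[of z m']
      unfolding in_closure_of by blast
    thus False using z(3) by blast
  qed
qed

lemma nd_I:
  assumes "\<And>y m. \<exists>z m'. m \<le> m' \<and> z \<in> cyl y m \<and> cyl z m' \<inter> S = {}"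
  shows "nowhere_dense S"
  unfolding nd_iff using assms by blast

lemma nd_empty: "nowhere_dense {}"
proof (rule nd_I)
  fix y m show "\<exists>z m'. m \<le> m' \<and> z \<in> cyl y m \<and> cyl z m' \<inter> {} = {}"
    by (intro exI[of _ y] exI[of _ m]) simp
qed

lemma meager_subset: "meager T \<Longrightarrow> S \<subseteq> T \<Longrightarrow> meager S"
proof -
  assume "meager T" "S \<subseteq> T"
  then obtain \<N> where "countable \<N>" "\<forall>N\<in>\<N>. nowhere_dense N" "T \<subseteq> \<Union>\<N>"
    unfolding meager_def by blast
  thus ?thesis unfolding meager_def using \<open>S \<subseteq> T\<close> by (intro exI[of _ \<N>]) auto
qed

lemma nd_meager: "nowhere_dense S \<Longrightarrow> meager S"
  unfolding meager_def by (intro exI[of _ "{S}"]) simp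

lemma meager_empty[simp]: "meager {}"
  unfolding meager_def by (intro exI[of _ "{}"]) simp

lemma meager_countable_Union:
  assumes "countable F" "\<And>S. S \<in> F \<Longrightarrow> meager S"
  shows "meager (\<Union>F)"
proof -
  have "\<forall>S\<in>F. \<exists>\<N>. countable \<N> \<and> (\<forall>X\<in>\<N>. nowhere_dense X) \<and> S \<subseteq> \<Union>\<N>"
    using assms(2) unfolding meager_def by blast
  then obtain N where N0: "\<forall>S\<in>F. countable (N S) \<and> (\<forall>X\<in>N S. nowhere_dense X) \<and> S \<subseteq> \<Union>(N S)"
    by (rule bchoice[THEN exE]) blast
  hence N: "\<And>S. S \<in> F \<Longrightarrow> countable (N S) \<and> (\<forall>X\<in>N S. nowhere_dense X) \<and> S \<subseteq> \<Union>(N S)"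
    by blast
  have "countable (\<Union>S\<in>F. N S)" using assms(1) N by (intro countable_UN) auto
  moreover have "\<forall>X\<in>(\<Union>S\<in>F. N S). nowhere_dense X" using N by blast
  moreover have "\<Union>F \<subseteq> \<Union>(\<Union>S\<in>F. N S)"
  proof
    fix x assume "x \<in> \<Union>F"
    then obtain S where S: "S \<in> F" "x \<in> S" by blast
    then obtain X where "X \<in> N S" "x \<in> X" using N[OF S(1)] by blast
    thus "x \<in> \<Union>(\<Union>S\<in>F. N S)" using S(1) by blast
  qed
  ultimately show ?thesis unfolding meager_def by blast
qed

lemma meager_Un: "meager S \<Longrightarrow> meager T \<Longrightarrow> meager (S \<union> T)"
proof -
  assume a: "meager S" "meager T"
  have "meager (\<Union>{S, T})" by (rule meager_countable_Union) (use a in auto)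
  thus ?thesis by simp
qed

lemma meager_UN_nat: "(\<And>k::nat. meager (S k)) \<Longrightarrow> meager (\<Union>k. S k)"
proof -
  assume a: "\<And>k::nat. meager (S k)"
  have "meager (\<Union>(range S))" by (rule meager_countable_Union) (use a in auto)
  thus ?thesis by simp
qed

lemma nested_limit:
  assumes m: "\<And>k. m k < m (Suc k)" and z: "\<And>k. z (Suc k) \<in> cyl (z k) (m k)"
  shows "\<exists>x. \<forall>k. x \<in> cyl (z k) (m k)"
proof -
  have sm: "strict_mono m" using m strict_mono_Suc_iff by blast
  have mono: "m k \<le> m j" if "k \<le> j" for k j
    using that sm strict_mono_less_eq by blast
  have nest: "z j \<in> cyl (z k) (m k)" if "k \<le> j" for k j
    using that
  proof (induction j)
    case 0 then show ?case by simp
  next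
    case (Suc j)
    show ?case
    proof (cases "k = Suc j")
      case True then show ?thesis by simp
    next
      case False
      hence "k \<le> j" using Suc by simp
      hence "z j \<in> cyl (z k) (m k)" "m k \<le> m j" using Suc mono by auto
      hence "cyl (z j) (m j) \<subseteq> cyl (z k) (m k)" using cyl_sub by blast
      then show ?thesis using z[of j] by blast
    qed
  qed
  have mk: "k \<le> m k" for k
    using sm strict_mono_imp_increasing by blast
  define x where "x = {i. i \<in> z (Suc i)}"
  have "x \<in> cyl (z k) (m k)" for k
    unfolding cyl_def
  proof (intro CollectI allI impI)
    fix i assume i: "i < m k"
    define j where "j = max k (Suc i)"
    have "z j \<in> cyl (z k) (m k)" using nest[of k j] by (simp add: j_def)
    hence 1: "(i \<in> z j) = (i \<in> z k)" using i by (simp add: cyl_def)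
    have "z j \<in> cyl (z (Suc i)) (m (Suc i))" using nest[of "Suc i" j] by (simp add: j_def)
    moreover have "i < m (Suc i)" using mk[of "Suc i"] by simp
    ultimately have "(i \<in> z j) = (i \<in> z (Suc i))" by (simp add: cyl_def)
    thus "(i \<in> x) = (i \<in> z k)" using 1 by (simp add: x_def)
  qed
  thus ?thesis by blast
qed


lemma baire:
  assumes "meager S"
  shows "\<exists>x\<in>cyl y m. x \<notin> S"
proof -
  obtain \<N> where N: "countable \<N>" "\<forall>N\<in>\<N>. nowhere_dense N" "S \<subseteq> \<Union>\<N>"
    using assms unfolding meager_def by blast
  define N where "N = (\<lambda>k. if \<N> = {} then {} else from_nat_into \<N> k)"
  have ndN: "nowhere_dense (N k)" for k
    using N(1,2) nd_empty by (simp add: N_def from_nat_into)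
  have SN: "S \<subseteq> (\<Union>k. N k)"
  proof
    fix s assume "s \<in> S"
    then obtain X where X: "X \<in> \<N>" "s \<in> X" using N(3) by blast
    then obtain k where "from_nat_into \<N> k = X" using from_nat_into_surj[OF N(1) X(1)] by blast
    hence "N k = X" using X(1) by (auto simp: N_def)
    thus "s \<in> (\<Union>k. N k)" using X(2) by blast
  qed
  have step: "\<exists>p. snd q < snd p \<and> fst p \<in> cyl (fst q) (snd q) \<and> cyl (fst p) (snd p) \<inter> N k = {}" for q k
  proof -
    obtain z m' where "snd q \<le> m'" "z \<in> cyl (fst q) (snd q)" "cyl z m' \<inter> N k = {}"
      using ndN[of k] unfolding nd_iff by blast
    moreover have "cyl z (Suc m') \<subseteq> cyl z m'" by (rule cyl_mono) simp
    ultimately show ?thesis by (intro exI[of _ "(z, Suc m')"]) auto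
  qed
  define st where "st = rec_nat (y, m) (\<lambda>k q. SOME p. snd q < snd p \<and> fst p \<in> cyl (fst q) (snd q) \<and> cyl (fst p) (snd p) \<inter> N k = {})"
  have st0: "st 0 = (y, m)" by (simp add: st_def)
  have stS: "snd (st k) < snd (st (Suc k)) \<and> fst (st (Suc k)) \<in> cyl (fst (st k)) (snd (st k)) \<and> cyl (fst (st (Suc k))) (snd (st (Suc k))) \<inter> N k = {}" for k
  proof -
    have "st (Suc k) = (SOME p. snd (st k) < snd p \<and> fst p \<in> cyl (fst (st k)) (snd (st k)) \<and> cyl (fst p) (snd p) \<inter> N k = {})"
      by (simp add: st_def)
    thus ?thesis using someI_ex[OF step[of "st k" k]] by simp
  qed
  obtain x where x: "\<forall>k. x \<in> cyl (fst (st k)) (snd (st k))"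
    using nested_limit[of "\<lambda>k. snd (st k)" "\<lambda>k. fst (st k)"] stS by blast
  have "x \<in> cyl y m" using x[rule_format, of 0] st0 by simp
  moreover have "x \<notin> N k" for k
  proof -
    have "x \<in> cyl (fst (st (Suc k))) (snd (st (Suc k)))" using x by blast
    moreover have "cyl (fst (st (Suc k))) (snd (st (Suc k))) \<inter> N k = {}" using stS[of k] by blast
    ultimately show ?thesis by blast
  qed
  ultimately show ?thesis using SN by blast
qed

lemma not_meager_cyl: "\<not> meager (cyl y m)"
  using baire[of "cyl y m" y m] by blast

lemma not_meager_UNIV: "\<not> meager (UNIV :: nat set set)"
  using baire[of UNIV "{}" 0] by blast



lemma nd_bits:
  assumes A: "infinite A"
  shows "nowhere_dense {P. \<forall>a\<in>A. k \<le> a \<longrightarrow> (a \<in> P) = b}"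
proof (rule nd_I)
  fix y m
  obtain a where a: "a \<in> A" "max k m \<le> a"
    using A infinite_nat_iff_unbounded_le by blast
  define z where "z = (if b then y - {a} else insert a y)"
  have "z \<in> cyl y m" using a by (auto simp: z_def cyl_def)
  moreover have "cyl z (Suc a) \<inter> {P. \<forall>a\<in>A. k \<le> a \<longrightarrow> (a \<in> P) = b} = {}"
  proof -
    { fix P assume "P \<in> cyl z (Suc a)" "\<forall>a\<in>A. k \<le> a \<longrightarrow> (a \<in> P) = b"
      hence "(a \<in> P) = (a \<in> z)" "(a \<in> P) = b" using a by (auto simp: cyl_def)
      hence False by (auto simp: z_def split: if_splits) }
    thus ?thesis by blast
  qed
  moreover have "m \<le> Suc a" using a by simp
  ultimately show "\<exists>z m'. m \<le> m' \<and> z \<in> cyl y m \<and> cyl z m' \<inter> {P. \<forall>a\<in>A. k \<le> a \<longrightarrow> (a \<in> P) = b} = {}"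
    by blast
qed

lemma meager_bits:
  assumes A: "infinite A"
  shows "meager {P. finite {a\<in>A. (a \<in> P) \<noteq> b}}"
proof -
  have "{P. finite {a\<in>A. (a \<in> P) \<noteq> b}} \<subseteq> (\<Union>k. {P. \<forall>a\<in>A. k \<le> a \<longrightarrow> (a \<in> P) = b})"
  proof
    fix P assume "P \<in> {P. finite {a\<in>A. (a \<in> P) \<noteq> b}}"
    then obtain k where "\<forall>a\<in>{a\<in>A. (a \<in> P) \<noteq> b}. a < k"
      using finite_nat_bounded[of "{a\<in>A. (a \<in> P) \<noteq> b}"] by auto
    hence "P \<in> {P. \<forall>a\<in>A. k \<le> a \<longrightarrow> (a \<in> P) = b}" by force
    thus "P \<in> (\<Union>k. {P. \<forall>a\<in>A. k \<le> a \<longrightarrow> (a \<in> P) = b})" by blast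
  qed
  moreover have "meager (\<Union>k. {P. \<forall>a\<in>A. k \<le> a \<longrightarrow> (a \<in> P) = b})"
    by (rule meager_UN_nat) (rule nd_meager[OF nd_bits[OF A]])
  ultimately show ?thesis using meager_subset by blast
qed

lemma meager_fin_inter: "infinite A \<Longrightarrow> meager {P. finite (A \<inter> P)}"
  using meager_bits[of A False] by (simp add: Int_def conj_commute)

lemma meager_fin_diff: "infinite A \<Longrightarrow> meager {P. finite (A - P)}"
  using meager_bits[of A True] by (simp add: set_diff_eq)

definition splits :: "nat set \<Rightarrow> nat set \<Rightarrow> bool" where
  "splits P A \<longleftrightarrow> infinite (A \<inter> P) \<and> infinite (A - P)"

lemma meager_not_splits: "infinite A \<Longrightarrow> meager {P. \<not> splits P A}"
proof -
  assume A: "infinite A"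
  have "{P. \<not> splits P A} = {P. finite (A \<inter> P)} \<union> {P. finite (A - P)}"
    by (auto simp: splits_def)
  thus ?thesis using meager_Un meager_fin_inter[OF A] meager_fin_diff[OF A] by simp
qed

lemma nd_singleton: "nowhere_dense {x}"
proof (rule nd_I)
  fix y m
  define z where "z = (if m \<in> x then y - {m} else insert m y)"
  have "z \<in> cyl y m" by (auto simp: z_def cyl_def)
  moreover have "cyl z (Suc m) \<inter> {x} = {}"
  proof -
    have "x \<notin> cyl z (Suc m)" by (auto simp: cyl_def z_def)
    thus ?thesis by blast
  qed
  ultimately show "\<exists>z m'. m \<le> m' \<and> z \<in> cyl y m \<and> cyl z m' \<inter> {x} = {}"
    by (intro exI[of _ z] exI[of _ "Suc m"]) simp
qed

lemma meager_countable: "countable S \<Longrightarrow> meager S"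
proof -
  assume "countable S"
  hence "countable ((\<lambda>x. {x}) ` S)" by simp
  moreover have "\<And>X. X \<in> (\<lambda>x. {x}) ` S \<Longrightarrow> meager X" using nd_meager nd_singleton by blast
  ultimately have "meager (\<Union>((\<lambda>x. {x}) ` S))" by (rule meager_countable_Union)
  thus ?thesis by simp
qed

lemma avoid_finite_exists:
  assumes "finite E" "meager W"
  shows "\<exists>x. x \<inter> E = {} \<and> x \<notin> W"
proof -
  obtain k where k: "\<forall>e\<in>E. e < k" using finite_nat_bounded[OF assms(1)] by auto
  obtain x where x: "x \<in> cyl {} k" "x \<notin> W" using baire[OF assms(2)] by blast
  have "x \<inter> E = {}" using x(1) k by (auto simp: cyl_def)
  thus ?thesis using x(2) by blast
qed


subsection \<open>Small sets\<close>

definition small :: "'a set \<Rightarrow> bool" where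
  "small X \<longleftrightarrow> |X| <o |UNIV :: nat set set|"

lemma infinite_c: "infinite (UNIV :: nat set set)"
proof -
  have "infinite (range (\<lambda>n::nat. {n}))" by (rule range_inj_infinite) (simp add: inj_def)
  thus ?thesis by (rule infinite_super[OF subset_UNIV])
qed

lemma fin_less_inf: "finite A \<Longrightarrow> infinite B \<Longrightarrow> |A| <o |B|"
  using finite_ordLess_infinite[of "|A|" "|B|"] by (simp add: Field_card_of card_of_Well_order card_of_well_order_on)

lemma small_finite: "finite X \<Longrightarrow> small X"
  unfolding small_def
  by (erule fin_less_inf[OF _ infinite_c])

lemma small_subset: "small B \<Longrightarrow> A \<subseteq> B \<Longrightarrow> small A"
  unfolding small_def by (rule ordLeq_ordLess_trans[OF card_of_mono1])

lemma small_image: "small A \<Longrightarrow> small (f ` A)"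
  unfolding small_def by (rule ordLeq_ordLess_trans[OF card_of_image])

lemma small_countable: "countable X \<Longrightarrow> small X"
proof -
  assume "countable X"
  hence "|X| \<le>o |UNIV :: nat set|" by (simp add: countable_def card_of_ordLeq[symmetric])
  moreover have "|UNIV :: nat set| <o |Pow (UNIV :: nat set)|" by (rule card_of_Pow)
  ultimately show ?thesis unfolding small_def by (simp add: ordLeq_ordLess_trans)
qed

lemma small_Un: "small A \<Longrightarrow> small B \<Longrightarrow> small (A \<union> B)"
  unfolding small_def by (rule card_of_Un_ordLess_infinite[OF infinite_c])

lemma small_UN_finite:
  assumes I: "small I" and F: "\<And>i. i \<in> I \<Longrightarrow> finite (A i)"
  shows "small (\<Union>i\<in>I. A i)"
proof (cases "finite I")
  case True
  thus ?thesis using F by (intro small_finite) blast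
next
  case False
  have "\<forall>i\<in>I. |A i| \<le>o |I|"
    using F False by (blast intro: ordLess_imp_ordLeq fin_less_inf)
  hence "|\<Union>i\<in>I. A i| \<le>o |I|"
    by (rule card_of_UNION_ordLeq_infinite[OF False ordIso_imp_ordLeq[OF card_of_refl]])
  thus ?thesis using I unfolding small_def by (rule ordLeq_ordLess_trans)
qed

lemma lists_len_le:
  assumes S: "infinite S"
  shows "|{xs. length xs = n \<and> set xs \<subseteq> S}| \<le>o |S|"
proof (induction n)
  case 0
  have "{xs. length xs = 0 \<and> set xs \<subseteq> S} = {[]}" by auto
  moreover have "|{[] :: 'a list}| \<le>o |S|"
    by (rule ordLess_imp_ordLeq, rule fin_less_inf) (auto simp: S)
  ultimately show ?case by simp
next
  case (Suc n)
  let ?L = "{xs. length xs = n \<and> set xs \<subseteq> S}"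
  have "{xs. length xs = Suc n \<and> set xs \<subseteq> S} \<subseteq> (\<lambda>(a, xs). a # xs) ` (S \<times> ?L)"
  proof
    fix xs assume "xs \<in> {xs. length xs = Suc n \<and> set xs \<subseteq> S}"
    then obtain a ys where "xs = a # ys" "a \<in> S" "ys \<in> ?L" by (cases xs) auto
    thus "xs \<in> (\<lambda>(a, xs). a # xs) ` (S \<times> ?L)" by force
  qed
  hence 1: "|{xs. length xs = Suc n \<and> set xs \<subseteq> S}| \<le>o |S \<times> ?L|"
    by (rule ordLeq_transitive[OF card_of_mono1 card_of_image])
  have 2: "|S \<times> ?L| \<le>o |S \<times> S|" using Suc by (rule card_of_Times_mono2)
  have 3: "|S \<times> S| \<le>o |S|" by (rule ordIso_imp_ordLeq[OF card_of_Times_same_infinite[OF S]])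
  show ?case by (rule ordLeq_transitive[OF 1 ordLeq_transitive[OF 2 3]])
qed

lemma Fpow_le:
  assumes S: "infinite S"
  shows "|Fpow S| \<le>o |S|"
proof -
  have "Fpow S \<subseteq> set ` (\<Union>n. {xs. length xs = n \<and> set xs \<subseteq> S})"
  proof
    fix F assume "F \<in> Fpow S"
    hence "finite F" "F \<subseteq> S" by (auto simp: Fpow_def)
    then obtain xs where "set xs = F" using finite_list by blast
    thus "F \<in> set ` (\<Union>n. {xs. length xs = n \<and> set xs \<subseteq> S})" using \<open>F \<subseteq> S\<close> by blast
  qed
  hence 1: "|Fpow S| \<le>o |\<Union>n. {xs. length xs = n \<and> set xs \<subseteq> S}|"
    by (rule ordLeq_transitive[OF card_of_mono1 card_of_image])
  have 2: "|\<Union>n. {xs. length xs = n \<and> set xs \<subseteq> S}| \<le>o |S|"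
    by (rule card_of_UNION_ordLeq_infinite[OF S infinite_iff_card_of_nat[THEN iffD1, OF S]])
       (use lists_len_le[OF S] in blast)
  show ?thesis by (rule ordLeq_transitive[OF 1 2])
qed

lemma small_Fpow: "small S \<Longrightarrow> small (Fpow S)"
proof (cases "finite S")
  case True
  thus ?thesis by (simp add: Fpow_def small_finite)
next
  case False
  assume "small S"
  thus ?thesis unfolding small_def by (rule ordLeq_ordLess_trans[OF Fpow_le[OF False]])
qed

lemma small_UNIV_not: "\<not> small (UNIV :: nat set set)"
  unfolding small_def by (simp add: ordLess_irreflexive)

locale addM_hyp =
  assumes addM: "is_addM (UNIV :: nat set set)"
begin

lemma small_meager_Union:
  assumes "small F" "\<And>M. M \<in> F \<Longrightarrow> meager M"
  shows "meager (\<Union>F)"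
proof (rule ccontr)
  assume "\<not> meager (\<Union>F)"
  hence "F \<in> nonmeager_unions" using assms(2) by (auto simp: nonmeager_unions_def)
  hence "|UNIV :: nat set set| \<le>o |F|" using addM by (auto simp: is_addM_def)
  thus False using assms(1) unfolding small_def using not_ordLess_ordLeq by auto
qed

end


definition cylof :: "nat \<Rightarrow> nat set set" where
  "cylof k = (case (from_nat k :: nat list \<times> nat) of (xs, m) \<Rightarrow> cyl (set xs) m)"

lemma cyl_restrict: "cyl y m = cyl (y \<inter> {..<m}) m"
  by (auto simp: cyl_def)

lemma cyl_is_cylof: "\<exists>k. cylof k = cyl y m"
proof -
  obtain xs where xs: "set xs = y \<inter> {..<m}" using finite_list[of "y \<inter> {..<m}"] by auto
  have "cylof (to_nat (xs, m)) = cyl (set xs) m" by (simp add: cylof_def)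
  also have "\<dots> = cyl y m" by (subst xs) (rule cyl_restrict[symmetric])
  finally show ?thesis by blast
qed

lemma openin_cylof: "openin cantor_top (cylof k)"
  by (simp add: cylof_def openin_cyl split: prod.splits)

lemma open_eq_UN_cylof:
  assumes "openin cantor_top G"
  shows "G = (\<Union>k\<in>{k. cylof k \<subseteq> G}. cylof k)"
proof
  show "G \<subseteq> (\<Union>k\<in>{k. cylof k \<subseteq> G}. cylof k)"
  proof
    fix y assume "y \<in> G"
    then obtain m where m: "cyl y m \<subseteq> G" using assms openin_cantor_iff by blast
    obtain k where "cylof k = cyl y m" using cyl_is_cylof by blast
    thus "y \<in> (\<Union>k\<in>{k. cylof k \<subseteq> G}. cylof k)" using m cyl_self[of y m] by blast
  qed
qed blast

definition opn :: "nat set \<Rightarrow> nat set set" where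
  "opn K = (\<Union>k\<in>K. cylof k)"

lemma openin_opn: "openin cantor_top (opn K)"
  unfolding opn_def by (rule openin_Union) (use openin_cylof in blast)

lemma open_is_opn: "openin cantor_top G \<Longrightarrow> \<exists>K. G = opn K"
  unfolding opn_def using open_eq_UN_cylof by blast

datatype bcode = BOpen "nat set" | BCompl bcode | BUn "nat \<Rightarrow> bcode"

primrec interp :: "bcode \<Rightarrow> nat set set" where
  "interp (BOpen K) = opn K"
| "interp (BCompl c) = - interp c"
| "interp (BUn f) = (\<Union>i. interp (f i))"

lemma borel_trace:
  assumes "U \<in> borel_in L"
  shows "\<exists>c. U = interp c \<inter> L"
  using assms unfolding borel_in_def
proof (induction rule: sigma_sets.induct)
  case (Basic a)
  then obtain T where T: "openin cantor_top T" "a = T \<inter> L" by (auto simp: openin_subtopology)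
  then obtain K where "T = opn K" using open_is_opn by blast
  thus ?case using T by (intro exI[of _ "BOpen K"]) simp
next
  case Empty
  show ?case by (intro exI[of _ "BOpen {}"]) (simp add: opn_def)
next
  case (Compl a)
  then obtain c where "a = interp c \<inter> L" by blast
  thus ?case by (intro exI[of _ "BCompl c"]) auto
next
  case (Union a)
  hence "\<forall>i. \<exists>c. a i = interp c \<inter> L" by blast
  from choice[OF this] obtain f where f: "\<forall>i. a i = interp (f i) \<inter> L" by blast
  have "(\<Union>i. a i) = interp (BUn f) \<inter> L" using f by auto
  thus ?case by blast
qed

definition has_bp :: "nat set set \<Rightarrow> bool" where
  "has_bp B \<longleftrightarrow> (\<exists>G M. openin cantor_top G \<and> meager M \<and> (\<forall>x. x \<notin> M \<longrightarrow> (x \<in> B \<longleftrightarrow> x \<in> G)))"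

lemma nd_boundary:
  assumes G: "openin cantor_top G"
  shows "nowhere_dense ((- G) - cantor_top interior_of (- G))"
proof (rule nd_I)
  fix y m
  show "\<exists>z m'. m \<le> m' \<and> z \<in> cyl y m \<and> cyl z m' \<inter> ((- G) - cantor_top interior_of (- G)) = {}"
  proof (cases "cyl y m \<subseteq> - G")
    case True
    hence "cyl y m \<subseteq> cantor_top interior_of (- G)" using interior_of_maximal openin_cyl by blast
    thus ?thesis by (intro exI[of _ y] exI[of _ m]) auto
  next
    case False
    then obtain z where z: "z \<in> cyl y m" "z \<in> G" by blast
    then obtain m1 where m1: "cyl z m1 \<subseteq> G" using G openin_cantor_iff by blast
    have "cyl z (max m m1) \<subseteq> G" using m1 cyl_mono[of m1 "max m m1" z] by auto
    thus ?thesis using z(1) by (intro exI[of _ z] exI[of _ "max m m1"]) auto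
  qed
qed

lemma interp_bp: "has_bp (interp c)"
proof (induction c)
  case (BOpen K)
  show ?case unfolding has_bp_def
    by (intro exI[of _ "opn K"] exI[of _ "{}"]) (simp add: openin_opn)
next
  case (BCompl c)
  obtain G M where GM: "openin cantor_top G" "meager M" "\<And>x. x \<notin> M \<Longrightarrow> (x \<in> interp c \<longleftrightarrow> x \<in> G)"
    using BCompl unfolding has_bp_def by blast
  define N where "N = (- G) - cantor_top interior_of (- G)"
  define G' where "G' = cantor_top interior_of (- G)"
  have mN: "meager N" unfolding N_def by (rule nd_meager[OF nd_boundary[OF GM(1)]])
  have mMN: "meager (M \<union> N)" by (rule meager_Un[OF GM(2) mN])
  have oG': "openin cantor_top G'" unfolding G'_def by (rule openin_interior_of)
  have eq: "x \<in> interp (BCompl c) \<longleftrightarrow> x \<in> G'" if x: "x \<notin> M \<union> N" for x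
  proof -
    have 1: "x \<in> G' \<Longrightarrow> x \<notin> G" using interior_of_subset[of cantor_top "- G"] unfolding G'_def by blast
    have 2: "x \<notin> G \<Longrightarrow> x \<in> G'" using x unfolding N_def G'_def by blast
    have 3: "x \<in> interp c \<longleftrightarrow> x \<in> G" using x GM(3) by blast
    show ?thesis using 1 2 3 by auto
  qed
  show ?case unfolding has_bp_def
  proof (intro exI conjI)
    show "openin cantor_top G'" by (rule oG')
    show "meager (M \<union> N)" by (rule mMN)
    show "\<forall>x. x \<notin> M \<union> N \<longrightarrow> (x \<in> interp (BCompl c) \<longleftrightarrow> x \<in> G')" using eq by blast
  qed
next
  case (BUn f)
  have "\<forall>i. \<exists>p. openin cantor_top (fst p) \<and> meager (snd p) \<and> (\<forall>x. x \<notin> snd p \<longrightarrow> (x \<in> interp (f i) \<longleftrightarrow> x \<in> fst p))"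
  proof
    fix i
    have "has_bp (interp (f i))" using BUn by simp
    then obtain G M where "openin cantor_top G" "meager M" "\<forall>x. x \<notin> M \<longrightarrow> (x \<in> interp (f i) \<longleftrightarrow> x \<in> G)"
      unfolding has_bp_def by blast
    thus "\<exists>p. openin cantor_top (fst p) \<and> meager (snd p) \<and> (\<forall>x. x \<notin> snd p \<longrightarrow> (x \<in> interp (f i) \<longleftrightarrow> x \<in> fst p))"
      by (intro exI[of _ "(G, M)"]) simp
  qed
  from choice[OF this] obtain p where p: "\<forall>i. openin cantor_top (fst (p i)) \<and> meager (snd (p i)) \<and> (\<forall>x. x \<notin> snd (p i) \<longrightarrow> (x \<in> interp (f i) \<longleftrightarrow> x \<in> fst (p i)))"
    by blast
  define G where "G i = fst (p i)" for i
  define M where "M i = snd (p i)" for i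
  have GM: "\<And>i. openin cantor_top (G i)" "\<And>i. meager (M i)"
    "\<And>i x. x \<notin> M i \<Longrightarrow> (x \<in> interp (f i) \<longleftrightarrow> x \<in> G i)"
    using p by (auto simp: G_def M_def)
  have "openin cantor_top (\<Union>i. G i)" by (rule openin_Union) (use GM(1) in blast)
  moreover have "meager (\<Union>i. M i)" by (rule meager_UN_nat[OF GM(2)])
  moreover have "\<forall>x. x \<notin> (\<Union>i. M i) \<longrightarrow> (x \<in> interp (BUn f) \<longleftrightarrow> x \<in> (\<Union>i. G i))"
    using GM(3) by simp
  ultimately show ?case unfolding has_bp_def
    by (intro exI[of _ "\<Union>i. G i"] exI[of _ "\<Union>i. M i"] conjI)
qed


definition Dset :: "(nat \<Rightarrow> nat set set) \<Rightarrow> nat set set" where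
  "Dset G = {x. infinite {n. x \<in> G n}}"

definition goodP :: "(nat \<Rightarrow> nat set set) \<Rightarrow> nat set \<Rightarrow> bool" where
  "goodP G P \<longleftrightarrow> (\<forall>k. cylof k \<inter> Dset G \<noteq> {} \<longrightarrow> splits P {n. G n \<inter> cylof k \<noteq> {}})"

definition Nset :: "(nat \<Rightarrow> nat set set) \<Rightarrow> nat set \<Rightarrow> nat set set" where
  "Nset G P = {x \<in> Dset G. \<not> splits P {n. x \<in> G n}}"

lemma meager_not_goodP: "meager {P. \<not> goodP G P}"
proof -
  define B where "B k = (if cylof k \<inter> Dset G \<noteq> {} then {P. \<not> splits P {n. G n \<inter> cylof k \<noteq> {}}} else {})" for k
  have "{P. \<not> goodP G P} \<subseteq> (\<Union>k. B k)"
  proof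
    fix P assume "P \<in> {P. \<not> goodP G P}"
    then obtain k where "cylof k \<inter> Dset G \<noteq> {}" "\<not> splits P {n. G n \<inter> cylof k \<noteq> {}}"
      unfolding goodP_def by blast
    hence "P \<in> B k" by (simp add: B_def)
    thus "P \<in> (\<Union>k. B k)" by blast
  qed
  moreover have "meager (B k)" for k
  proof (cases "cylof k \<inter> Dset G \<noteq> {}")
    case True
    then obtain x where x: "x \<in> cylof k" "x \<in> Dset G" by blast
    have "{n. x \<in> G n} \<subseteq> {n. G n \<inter> cylof k \<noteq> {}}" using x(1) by blast
    moreover have "infinite {n. x \<in> G n}" using x(2) by (simp add: Dset_def)
    ultimately have "infinite {n. G n \<inter> cylof k \<noteq> {}}" using finite_subset by blast
    thus ?thesis using True meager_not_splits by (simp add: B_def)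
  next
    case False thus ?thesis by (simp add: B_def)
  qed
  hence "meager (\<Union>k. B k)" by (rule meager_UN_nat)
  ultimately show ?thesis by (rule meager_subset[rotated])
qed

lemma nd_C:
  assumes op: "\<And>n. openin cantor_top (G n)"
    and cond: "\<And>y m. cyl y m \<inter> Dset G \<noteq> {} \<Longrightarrow> infinite ({n. G n \<inter> cyl y m \<noteq> {}} \<inter> Q)"
  shows "nowhere_dense ({x. \<forall>n\<in>Q. k \<le> n \<longrightarrow> x \<notin> G n} \<inter> Dset G)"
proof (rule nd_I)
  fix y m
  define C where "C = {x. \<forall>n\<in>Q. k \<le> n \<longrightarrow> x \<notin> G n} \<inter> Dset G"
  have "\<exists>z m'. m \<le> m' \<and> z \<in> cyl y m \<and> cyl z m' \<inter> C = {}"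
  proof (cases "cyl y m \<inter> Dset G = {}")
    case True
    have "cyl y m \<inter> C = {}" using True unfolding C_def by blast
    thus ?thesis using cyl_self[of y m] by blast
  next
    case False
    hence inf: "infinite ({n. G n \<inter> cyl y m \<noteq> {}} \<inter> Q)" by (rule cond)
    obtain n where n: "k \<le> n" "n \<in> {n. G n \<inter> cyl y m \<noteq> {}} \<inter> Q"
      using inf unfolding infinite_nat_iff_unbounded_le by blast
    hence nQ: "n \<in> Q" and "G n \<inter> cyl y m \<noteq> {}" by auto
    then obtain w where w: "w \<in> G n" "w \<in> cyl y m" by blast
    then obtain m1 where m1: "cyl w m1 \<subseteq> G n" using op[of n] openin_cantor_iff by blast
    have sub: "cyl w (max m m1) \<subseteq> G n" using m1 cyl_mono[of m1 "max m m1" w] by auto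
    have "cyl w (max m m1) \<inter> C = {}"
    proof -
      { fix x assume x1: "x \<in> cyl w (max m m1)" and x2: "x \<in> C"
        have "x \<in> G n" using x1 sub by blast
        moreover have "x \<notin> G n" using x2 nQ n(1) unfolding C_def by blast
        ultimately have False by blast }
      thus ?thesis by blast
    qed
    moreover have "m \<le> max m m1" by simp
    ultimately show ?thesis using w(2) by blast
  qed
  thus "\<exists>z m'. m \<le> m' \<and> z \<in> cyl y m \<and> cyl z m' \<inter> ({x. \<forall>n\<in>Q. k \<le> n \<longrightarrow> x \<notin> G n} \<inter> Dset G) = {}"
    unfolding C_def .
qed

lemma meager_Nset:
  assumes op: "\<And>n. openin cantor_top (G n)" and gp: "goodP G P"
  shows "meager (Nset G P)"
proof -
  have cond: "infinite ({n. G n \<inter> cyl y m \<noteq> {}} \<inter> P) \<and> infinite ({n. G n \<inter> cyl y m \<noteq> {}} \<inter> - P)"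
    if "cyl y m \<inter> Dset G \<noteq> {}" for y m
  proof -
    obtain k where k: "cylof k = cyl y m" using cyl_is_cylof by blast
    have "cylof k \<inter> Dset G \<noteq> {}" using that k by simp
    hence "splits P {n. G n \<inter> cylof k \<noteq> {}}" using gp unfolding goodP_def by blast
    hence "splits P {n. G n \<inter> cyl y m \<noteq> {}}" using k by simp
    thus ?thesis by (simp add: splits_def Diff_eq)
  qed
  define C where "C Q k = {x. \<forall>n\<in>Q. k \<le> n \<longrightarrow> x \<notin> G n} \<inter> Dset G" for Q k
  have ndP: "nowhere_dense (C P k)" for k
    unfolding C_def by (rule nd_C[OF op]) (use cond in blast)
  have ndQ: "nowhere_dense (C (- P) k)" for k
    unfolding C_def by (rule nd_C[OF op]) (use cond in blast)
  have "Nset G P \<subseteq> (\<Union>k. C P k) \<union> (\<Union>k. C (- P) k)"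
  proof
    fix x assume x: "x \<in> Nset G P"
    hence xD: "x \<in> Dset G" and ns: "\<not> splits P {n. x \<in> G n}" by (auto simp: Nset_def)
    show "x \<in> (\<Union>k. C P k) \<union> (\<Union>k. C (- P) k)"
    proof (cases "finite ({n. x \<in> G n} \<inter> P)")
      case True
      then obtain k where k: "\<forall>n\<in>{n. x \<in> G n} \<inter> P. n < k" using finite_nat_bounded by blast
      have "\<forall>n\<in>P. k \<le> n \<longrightarrow> x \<notin> G n"
      proof (intro ballI impI notI)
        fix n assume "n \<in> P" "k \<le> n" "x \<in> G n"
        hence "n < k" using k by blast
        thus False using \<open>k \<le> n\<close> by simp
      qed
      hence "x \<in> C P k" unfolding C_def using xD by blast
      thus ?thesis by blast
    next
      case False
      hence "finite ({n. x \<in> G n} - P)" using ns by (simp add: splits_def)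
      then obtain k where k: "\<forall>n\<in>{n. x \<in> G n} - P. n < k" using finite_nat_bounded by blast
      have "\<forall>n\<in>- P. k \<le> n \<longrightarrow> x \<notin> G n"
      proof (intro ballI impI notI)
        fix n assume "n \<in> - P" "k \<le> n" "x \<in> G n"
        hence "n < k" using k by blast
        thus False using \<open>k \<le> n\<close> by simp
      qed
      hence "x \<in> C (- P) k" unfolding C_def using xD by blast
      thus ?thesis by blast
    qed
  qed
  moreover have "meager ((\<Union>k. C P k) \<union> (\<Union>k. C (- P) k))"
    by (rule meager_Un; rule meager_UN_nat; rule nd_meager) (simp_all add: ndP ndQ)
  ultimately show ?thesis by (rule meager_subset[rotated])
qed


lemma nd_preimage:
  assumes i: "\<And>z m. \<exists>m1. \<forall>z'\<in>cyl z m1. \<phi> z' \<in> cyl (\<phi> z) m"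
    and ii: "\<And>y m. \<exists>m2. \<forall>x\<in>cyl (\<phi> y) m2. \<exists>z\<in>cyl y m. \<phi> z = x"
    and N: "nowhere_dense N"
  shows "nowhere_dense (\<phi> -` N)"
proof (rule nd_I)
  fix y m
  obtain m2 where m2: "\<forall>x\<in>cyl (\<phi> y) m2. \<exists>z\<in>cyl y m. \<phi> z = x" using ii by blast
  obtain w m3 where w: "m2 \<le> m3" "w \<in> cyl (\<phi> y) m2" "cyl w m3 \<inter> N = {}"
    using N unfolding nd_iff by blast
  obtain z0 where z0: "z0 \<in> cyl y m" "\<phi> z0 = w" using m2 w(2) by blast
  obtain m1 where m1: "\<forall>z'\<in>cyl z0 m1. \<phi> z' \<in> cyl (\<phi> z0) m3" using i by blast
  have "cyl z0 (max m m1) \<inter> \<phi> -` N = {}"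
  proof -
    { fix z' assume "z' \<in> cyl z0 (max m m1)" "z' \<in> \<phi> -` N"
      hence "z' \<in> cyl z0 m1" "\<phi> z' \<in> N" using cyl_mono[of m1 "max m m1" z0] by auto
      hence "\<phi> z' \<in> cyl w m3" "\<phi> z' \<in> N" using m1 z0(2) by auto
      hence False using w(3) by blast }
    thus ?thesis by blast
  qed
  moreover have "m \<le> max m m1" by simp
  ultimately show "\<exists>z m'. m \<le> m' \<and> z \<in> cyl y m \<and> cyl z m' \<inter> \<phi> -` N = {}"
    using z0(1) by blast
qed

lemma meager_preimage:
  assumes i: "\<And>z m. \<exists>m1. \<forall>z'\<in>cyl z m1. \<phi> z' \<in> cyl (\<phi> z) m"
    and ii: "\<And>y m. \<exists>m2. \<forall>x\<in>cyl (\<phi> y) m2. \<exists>z\<in>cyl y m. \<phi> z = x"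
    and M: "meager M"
  shows "meager (\<phi> -` M)"
proof -
  obtain \<N> where N: "countable \<N>" "\<forall>N\<in>\<N>. nowhere_dense N" "M \<subseteq> \<Union>\<N>"
    using M unfolding meager_def by blast
  have "countable ((\<lambda>N. \<phi> -` N) ` \<N>)" using N(1) by simp
  moreover have "\<forall>X\<in>(\<lambda>N. \<phi> -` N) ` \<N>. nowhere_dense X"
    using N(2) nd_preimage[OF i ii] by blast
  moreover have "\<phi> -` M \<subseteq> \<Union>((\<lambda>N. \<phi> -` N) ` \<N>)" using N(3) by blast
  ultimately show ?thesis unfolding meager_def by blast
qed

definition fpair :: "nat set \<Rightarrow> nat set \<Rightarrow> nat set" where
  "fpair Q z = {n. 2*n \<in> z \<and> (n \<in> Q \<longrightarrow> 2*n+1 \<notin> z)}"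

definition gpair :: "nat set \<Rightarrow> nat set" where
  "gpair z = {n. 2*n+1 \<in> z}"

lemma fpair_i: "\<exists>m1. \<forall>z'\<in>cyl z m1. fpair Q z' \<in> cyl (fpair Q z) m"
proof (intro exI[of _ "2*m"] ballI)
  fix z' assume z': "z' \<in> cyl z (2*m)"
  { fix n assume "n < m"
    hence "2*n < 2*m" "2*n+1 < 2*m" by auto
    hence "(2*n \<in> z') = (2*n \<in> z)" "(2*n+1 \<in> z') = (2*n+1 \<in> z)" using z' by (auto simp: cyl_def)
    hence "(n \<in> fpair Q z') = (n \<in> fpair Q z)" by (simp add: fpair_def) }
  thus "fpair Q z' \<in> cyl (fpair Q z) m" by (simp add: cyl_def)
qed

lemma gpair_i: "\<exists>m1. \<forall>z'\<in>cyl z m1. gpair z' \<in> cyl (gpair z) m"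
proof (intro exI[of _ "2*m"] ballI)
  fix z' assume z': "z' \<in> cyl z (2*m)"
  { fix n assume "n < m"
    hence "2*n+1 < 2*m" by auto
    hence "(2*n+1 \<in> z') = (2*n+1 \<in> z)" using z' by (auto simp: cyl_def)
    hence "(n \<in> gpair z') = (n \<in> gpair z)" by (simp add: gpair_def) }
  thus "gpair z' \<in> cyl (gpair z) m" by (simp add: cyl_def)
qed

lemma fpair_ii: "\<exists>m2. \<forall>x\<in>cyl (fpair Q y) m2. \<exists>z\<in>cyl y m. fpair Q z = x"
proof (intro exI[of _ m] ballI)
  fix x assume x: "x \<in> cyl (fpair Q y) m"
  define z where "z = {i \<in> y. i < 2*m} \<union> {i. \<exists>n. i = 2*n \<and> m \<le> n \<and> n \<in> x}"
  have "z \<in> cyl y m" by (auto simp: z_def cyl_def)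
  moreover have "fpair Q z = x"
  proof (intro set_eqI)
    fix n show "(n \<in> fpair Q z) = (n \<in> x)"
    proof (cases "n < m")
      case True
      hence "2*n < 2*m" "2*n+1 < 2*m" by auto
      hence "(2*n \<in> z) = (2*n \<in> y)" "(2*n+1 \<in> z) = (2*n+1 \<in> y)" by (auto simp: z_def)
      hence "(n \<in> fpair Q z) = (n \<in> fpair Q y)" by (simp add: fpair_def)
      also have "\<dots> = (n \<in> x)" using x True by (simp add: cyl_def)
      finally show ?thesis .
    next
      case False
      have "(2*n \<in> z) = (n \<in> x)" using False by (auto simp: z_def)
      moreover have "2*n+1 \<notin> z" using False by (auto simp: z_def) presburger
      ultimately show ?thesis by (simp add: fpair_def)
    qed
  qed
  ultimately show "\<exists>z\<in>cyl y m. fpair Q z = x" by blast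
qed

lemma gpair_ii: "\<exists>m2. \<forall>x\<in>cyl (gpair y) m2. \<exists>z\<in>cyl y m. gpair z = x"
proof (intro exI[of _ m] ballI)
  fix x assume x: "x \<in> cyl (gpair y) m"
  define z where "z = {i \<in> y. i < 2*m} \<union> {i. \<exists>n. i = 2*n+1 \<and> m \<le> n \<and> n \<in> x}"
  have "z \<in> cyl y m" by (auto simp: z_def cyl_def)
  moreover have "gpair z = x"
  proof (intro set_eqI)
    fix n show "(n \<in> gpair z) = (n \<in> x)"
    proof (cases "n < m")
      case True
      hence "2*n+1 < 2*m" by auto
      hence "(2*n+1 \<in> z) = (2*n+1 \<in> y)" by (auto simp: z_def)
      hence "(n \<in> gpair z) = (n \<in> gpair y)" by (simp add: gpair_def)
      also have "\<dots> = (n \<in> x)" using x True by (simp add: cyl_def)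
      finally show ?thesis .
    next
      case False
      have "(2*n+1 \<in> z) = (n \<in> x)" using False by (auto simp: z_def)
      thus ?thesis by (simp add: gpair_def)
    qed
  qed
  ultimately show "\<exists>z\<in>cyl y m. gpair z = x" by blast
qed

lemma meager_fpair: "meager M \<Longrightarrow> meager (fpair Q -` M)"
  by (rule meager_preimage[OF fpair_i fpair_ii])

lemma meager_gpair: "meager M \<Longrightarrow> meager (gpair -` M)"
  by (rule meager_preimage[OF gpair_i gpair_ii])

lemma fpair_gpair_disj: "fpair Q z \<inter> gpair z \<inter> Q = {}"
  by (auto simp: fpair_def gpair_def)

lemma nd_pairbits:
  assumes A: "infinite A"
  shows "nowhere_dense {z. \<forall>n\<in>A. k \<le> n \<longrightarrow> \<not> (2*n \<in> z \<and> 2*n+1 \<in> z)}"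
proof (rule nd_I)
  fix y m
  obtain n where n: "n \<in> A" "max k m \<le> n"
    using A unfolding infinite_nat_iff_unbounded_le by blast
  define z where "z = y \<union> {2*n, 2*n+1}"
  have "z \<in> cyl y m" using n by (auto simp: z_def cyl_def)
  moreover have "cyl z (2*n+2) \<inter> {z. \<forall>n\<in>A. k \<le> n \<longrightarrow> \<not> (2*n \<in> z \<and> 2*n+1 \<in> z)} = {}"
  proof -
    { fix w assume w1: "w \<in> cyl z (2*n+2)" and w2: "\<forall>n\<in>A. k \<le> n \<longrightarrow> \<not> (2*n \<in> w \<and> 2*n+1 \<in> w)"
      have "2*n \<in> w" "2*n+1 \<in> w" using w1 by (auto simp: cyl_def z_def)
      hence False using w2 n by auto }
    thus ?thesis by blast
  qed
  moreover have "m \<le> 2*n+2" using n by simp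
  ultimately show "\<exists>z m'. m \<le> m' \<and> z \<in> cyl y m \<and> cyl z m' \<inter> {z. \<forall>n\<in>A. k \<le> n \<longrightarrow> \<not> (2*n \<in> z \<and> 2*n+1 \<in> z)} = {}"
    by blast
qed

lemma meager_pair_fin:
  assumes A: "infinite (h - Q)"
  shows "meager {z. finite (fpair Q z \<inter> gpair z \<inter> h)}"
proof -
  have "{z. finite (fpair Q z \<inter> gpair z \<inter> h)} \<subseteq> (\<Union>k. {z. \<forall>n\<in>h - Q. k \<le> n \<longrightarrow> \<not> (2*n \<in> z \<and> 2*n+1 \<in> z)})"
  proof
    fix z assume "z \<in> {z. finite (fpair Q z \<inter> gpair z \<inter> h)}"
    hence fin: "finite (fpair Q z \<inter> gpair z \<inter> h)" by simp
    then obtain k where k: "\<forall>n\<in>fpair Q z \<inter> gpair z \<inter> h. n < k" using finite_nat_bounded by blast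
    have "\<forall>n\<in>h - Q. k \<le> n \<longrightarrow> \<not> (2*n \<in> z \<and> 2*n+1 \<in> z)"
    proof (intro ballI impI notI)
      fix n assume n: "n \<in> h - Q" "k \<le> n" "2*n \<in> z \<and> 2*n+1 \<in> z"
      hence "n \<in> fpair Q z \<inter> gpair z \<inter> h" by (auto simp: fpair_def gpair_def)
      hence "n < k" using k by blast
      thus False using n(2) by simp
    qed
    thus "z \<in> (\<Union>k. {z. \<forall>n\<in>h - Q. k \<le> n \<longrightarrow> \<not> (2*n \<in> z \<and> 2*n+1 \<in> z)})" by blast
  qed
  moreover have "meager (\<Union>k. {z. \<forall>n\<in>h - Q. k \<le> n \<longrightarrow> \<not> (2*n \<in> z \<and> 2*n+1 \<in> z)})"
    by (rule meager_UN_nat, rule nd_meager, rule nd_pairbits[OF A])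
  ultimately show ?thesis by (rule meager_subset[rotated])
qed



primrec enc :: "bcode \<Rightarrow> (nat list \<times> nat) set" where
  "enc (BOpen K) = {([], 0)} \<union> (\<lambda>k. ([], k + 3)) ` K"
| "enc (BCompl c) = {([], 1)} \<union> (\<lambda>(p, v). (0 # p, v)) ` enc c"
| "enc (BUn f) = {([], 2)} \<union> (\<Union>i. (\<lambda>(p, v). (i # p, v)) ` enc (f i))"

lemma img_cons_iff: "((i # p, v) \<in> (\<lambda>(p, v). (j # p, v)) ` E) = (i = j \<and> (p, v) \<in> E)"
  by force

lemma img_cons_nil: "(([], v) \<in> (\<lambda>(p, v). (j # p, v)) ` E) = False"
  by force

lemma img_k3: "(([] :: nat list, (k::nat) + 3) \<in> (\<lambda>k. ([], k + 3)) ` K) = (k \<in> K)"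
  by force

lemma img_k: "(([] :: nat list, v) \<in> (\<lambda>k::nat. ([], k + 3)) ` K) = (\<exists>k\<in>K. v = k + 3)"
  by force

lemma enc_root:
  "(([], v) \<in> enc (BOpen K)) = (v = 0 \<or> (\<exists>k\<in>K. v = k + 3))"
  "(([], v) \<in> enc (BCompl c)) = (v = 1)"
  "(([], v) \<in> enc (BUn f)) = (v = 2)"
  by (auto simp: img_cons_nil)

lemma enc_cons:
  "((i # p, v) \<in> enc (BOpen K)) = False"
  "((i # p, v) \<in> enc (BCompl c)) = (i = 0 \<and> (p, v) \<in> enc c)"
  "((i # p, v) \<in> enc (BUn f)) = ((p, v) \<in> enc (f i))"
  by (auto simp: img_cons_iff)

lemma enc_eqI: "(\<And>p v. (p, v) \<in> A \<longleftrightarrow> (p, v) \<in> B) \<Longrightarrow> A = B"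
  by auto

lemma enc_inj: "enc c = enc d \<Longrightarrow> c = d"
proof (induction c arbitrary: d)
  case (BOpen K)
  have r: "([], v) \<in> enc d \<longleftrightarrow> ([], v) \<in> enc (BOpen K)" for v using BOpen.prems by simp
  show ?case
  proof (cases d)
    case (BOpen K')
    have "k \<in> K \<longleftrightarrow> k \<in> K'" for k using r[of "k+3"] \<open>d = BOpen K'\<close> by (simp add: img_k3)
    thus ?thesis using \<open>d = BOpen K'\<close> by blast
  next
    case (BCompl c')
    thus ?thesis using r[of 0] by (simp add: enc_root img_cons_nil img_k)
  next
    case (BUn f')
    thus ?thesis using r[of 0] by (simp add: enc_root img_cons_nil img_k)
  qed
next
  case (BCompl c)
  have r: "x \<in> enc d \<longleftrightarrow> x \<in> enc (BCompl c)" for x using BCompl.prems by simp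
  show ?case
  proof (cases d)
    case (BOpen K')
    thus ?thesis using r[of "([], 1)"] by (simp add: enc_root img_cons_nil img_k)
  next
    case (BCompl c')
    have "enc c = enc c'"
    proof (rule enc_eqI)
      fix p v show "(p, v) \<in> enc c \<longleftrightarrow> (p, v) \<in> enc c'"
        using r[of "(0 # p, v)"] \<open>d = BCompl c'\<close> by (simp add: enc_cons img_cons_iff)
    qed
    hence "c = c'" by (rule BCompl.IH)
    thus ?thesis using \<open>d = BCompl c'\<close> by simp
  next
    case (BUn f')
    thus ?thesis using r[of "([], 1)"] by (simp add: enc_root img_cons_nil img_k)
  qed
next
  case (BUn f)
  have r: "x \<in> enc d \<longleftrightarrow> x \<in> enc (BUn f)" for x using BUn.prems by simp
  show ?case
  proof (cases d)
    case (BOpen K')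
    thus ?thesis using r[of "([], 2)"] by (simp add: enc_root img_cons_nil img_k)
  next
    case (BCompl c')
    thus ?thesis using r[of "([], 2)"] by (simp add: enc_root img_cons_nil img_k)
  next
    case (BUn f')
    have "f i = f' i" for i
    proof -
      have "enc (f i) = enc (f' i)"
      proof (rule enc_eqI)
        fix p v show "(p, v) \<in> enc (f i) \<longleftrightarrow> (p, v) \<in> enc (f' i)"
          using r[of "(i # p, v)"] \<open>d = BUn f'\<close> by (simp add: enc_cons img_cons_iff)
      qed
      thus ?thesis using BUn.IH[of "f i"] by simp
    qed
    thus ?thesis using \<open>d = BUn f'\<close> by auto
  qed
qed

definition seqenc :: "(nat \<Rightarrow> 'b::countable set) \<Rightarrow> nat set" where
  "seqenc F = {to_nat (n, b) | n b. b \<in> F n}"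

lemma seqenc_inj: "inj seqenc"
proof (rule injI)
  fix F G :: "nat \<Rightarrow> 'b::countable set"
  assume eq: "seqenc F = seqenc G"
  have "b \<in> F n \<longleftrightarrow> b \<in> G n" for n b
  proof -
    have "b \<in> F n \<longleftrightarrow> to_nat (n, b) \<in> seqenc F" by (auto simp: seqenc_def)
    also have "\<dots> \<longleftrightarrow> to_nat (n, b) \<in> seqenc G" using eq by simp
    also have "\<dots> \<longleftrightarrow> b \<in> G n" by (auto simp: seqenc_def)
    finally show ?thesis .
  qed
  thus "F = G" by blast
qed

lemma le_c_by_inj:
  assumes "inj (f :: 'a \<Rightarrow> nat set)"
  shows "|UNIV :: 'a set| \<le>o |UNIV :: nat set set|"
  using assms card_of_ordLeq[of "UNIV :: 'a set" "UNIV :: nat set set"] by blast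

lemma surj_from_c:
  assumes "|UNIV :: 'a set| \<le>o |UNIV :: nat set set|"
  shows "\<exists>g :: nat set \<Rightarrow> 'a. surj g"
  using assms card_of_ordLeq2[of "UNIV :: 'a set" "UNIV :: nat set set"] by blast

lemma surj_seqset: "\<exists>g :: nat set \<Rightarrow> (nat \<Rightarrow> nat set). surj g"
  by (rule surj_from_c, rule le_c_by_inj[of seqenc], rule seqenc_inj)

lemma surj_bseq: "\<exists>g :: nat set \<Rightarrow> (nat \<Rightarrow> bcode). surj g"
proof (rule surj_from_c, rule le_c_by_inj)
  show "inj (\<lambda>cs :: nat \<Rightarrow> bcode. seqenc (\<lambda>n. enc (cs n)))"
  proof (rule injI)
    fix cs ds :: "nat \<Rightarrow> bcode"
    assume "seqenc (\<lambda>n. enc (cs n)) = seqenc (\<lambda>n. enc (ds n))"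
    hence "(\<lambda>n. enc (cs n)) = (\<lambda>n. enc (ds n))" by (rule injD[OF seqenc_inj])
    hence "enc (cs n) = enc (ds n)" for n by (rule fun_cong)
    thus "cs = ds" using enc_inj by blast
  qed
qed



definition Hs :: "nat set set \<Rightarrow> nat set set" where
  "Hs S = (\<lambda>F. \<Inter>F) ` Fpow S"

definition inv :: "nat set set \<Rightarrow> bool" where
  "inv S \<longleftrightarrow> (\<forall>F\<in>Fpow S. infinite (\<Inter>F))"

definition dbor :: "nat set \<Rightarrow> (nat \<Rightarrow> bcode)" where
  "dbor = (SOME g. surj g)"

definition bp :: "bcode \<Rightarrow> nat set set \<times> nat set set" where
  "bp c = (SOME p. openin cantor_top (fst p) \<and> meager (snd p) \<and> (\<forall>x. x \<notin> snd p \<longrightarrow> (x \<in> interp c \<longleftrightarrow> x \<in> fst p)))"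

lemma bp_spec: "openin cantor_top (fst (bp c)) \<and> meager (snd (bp c)) \<and> (\<forall>x. x \<notin> snd (bp c) \<longrightarrow> (x \<in> interp c \<longleftrightarrow> x \<in> fst (bp c)))"
proof -
  obtain G M where "openin cantor_top G" "meager M" "\<forall>x. x \<notin> M \<longrightarrow> (x \<in> interp c \<longleftrightarrow> x \<in> G)"
    using interp_bp[of c] unfolding has_bp_def by blast
  hence "\<exists>p. openin cantor_top (fst p) \<and> meager (snd p) \<and> (\<forall>x. x \<notin> snd p \<longrightarrow> (x \<in> interp c \<longleftrightarrow> x \<in> fst p))"
    by (intro exI[of _ "(G, M)"]) simp
  thus ?thesis unfolding bp_def by (rule someI_ex)
qed

definition Ob :: "nat set \<Rightarrow> nat \<Rightarrow> nat set set" where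
  "Ob \<beta> n = fst (bp (dbor \<beta> n))"

definition Mb :: "nat set \<Rightarrow> nat set set" where
  "Mb \<beta> = (\<Union>n. snd (bp (dbor \<beta> n)))"

definition Aset :: "nat set \<Rightarrow> nat set \<Rightarrow> nat set" where
  "Aset \<beta> x = {n. x \<in> interp (dbor \<beta> n)}"

lemma Ob_open: "openin cantor_top (Ob \<beta> n)"
  using bp_spec by (simp add: Ob_def)

lemma Mb_meager: "meager (Mb \<beta>)"
  unfolding Mb_def by (rule meager_UN_nat) (use bp_spec in blast)

lemma Aset_Ob: "x \<notin> Mb \<beta> \<Longrightarrow> Aset \<beta> x = {n. x \<in> Ob \<beta> n}"
  using bp_spec unfolding Aset_def Ob_def Mb_def by blast

lemma dbor_surj: "surj dbor"
  unfolding dbor_def using surj_bseq by (rule someI_ex)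

definition dmc :: "nat set \<Rightarrow> (nat \<Rightarrow> nat set)" where
  "dmc = (SOME g. surj g)"

lemma dmc_surj: "surj dmc"
  unfolding dmc_def using surj_seqset by (rule someI_ex)

definition dm :: "nat set \<Rightarrow> nat set set" where
  "dm \<beta> = (\<Union>n. if nowhere_dense (- opn (dmc \<beta> n)) then - opn (dmc \<beta> n) else {})"

lemma dm_meager: "meager (dm \<beta>)"
  unfolding dm_def by (rule meager_UN_nat) (simp add: nd_meager)

lemma dm_cover:
  assumes "meager M"
  shows "\<exists>\<beta>. M \<subseteq> dm \<beta>"
proof -
  obtain \<N> where N: "countable \<N>" "\<forall>N\<in>\<N>. nowhere_dense N" "M \<subseteq> \<Union>\<N>"
    using assms unfolding meager_def by blast
  define Kof where "Kof N = (SOME K. opn K = - (cantor_top closure_of N))" for N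
  have Kof: "opn (Kof N) = - (cantor_top closure_of N)" for N
  proof -
    have "openin cantor_top (topspace cantor_top - cantor_top closure_of N)"
      using closedin_closure_of[of cantor_top N] unfolding closedin_def by blast
    hence "openin cantor_top (- (cantor_top closure_of N))" by (simp add: Compl_eq_Diff_UNIV)
    then obtain K where "- (cantor_top closure_of N) = opn K" using open_is_opn by blast
    hence "\<exists>K. opn K = - (cantor_top closure_of N)" by metis
    thus ?thesis unfolding Kof_def by (rule someI_ex)
  qed
  show ?thesis
  proof (cases "\<N> = {}")
    case True
    thus ?thesis using N(3) by blast
  next
    case False
    define seq where "seq n = Kof (from_nat_into \<N> n)" for n
    obtain \<beta> where \<beta>: "dmc \<beta> = seq" using dmc_surj by (metis surjD)
    have "M \<subseteq> dm \<beta>"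
    proof
      fix x assume "x \<in> M"
      then obtain N where xN: "N \<in> \<N>" "x \<in> N" using N(3) by blast
      then obtain n where n: "from_nat_into \<N> n = N" using from_nat_into_surj[OF N(1)] by blast
      have "- opn (dmc \<beta> n) = cantor_top closure_of N" using \<beta> n Kof by (simp add: seq_def)
      moreover have "nowhere_dense (cantor_top closure_of N)"
        using N(2) xN(1) by (simp add: nowhere_dense_def)
      moreover have "x \<in> cantor_top closure_of N" using closure_of_subset[of N cantor_top] xN(2) by auto
      ultimately have "x \<in> (if nowhere_dense (- opn (dmc \<beta> n)) then - opn (dmc \<beta> n) else {})" by simp
      thus "x \<in> dm \<beta>" unfolding dm_def by blast
    qed
    thus ?thesis by blast
  qed
qed

definition spec :: "nat set set \<Rightarrow> nat set set \<Rightarrow> nat set \<Rightarrow> nat set set \<times> nat set \<Rightarrow> bool" where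
  "spec S W \<alpha> p \<longleftrightarrow> finite (fst p) \<and> fst p \<noteq> {} \<and> fst p \<inter> W = {} \<and>
     (\<forall>G\<subseteq>fst p. \<forall>F\<in>Fpow S. infinite (\<Inter>(G \<union> F))) \<and>
     (\<exists>x\<in>fst p. card \<alpha> \<notin> x) \<and>
     (\<exists>F. finite F \<and> F \<noteq> {} \<and> F \<subseteq> S \<union> fst p \<and> (\<Inter>F \<inter> \<alpha> = {} \<or> \<Inter>F \<inter> - \<alpha> = {})) \<and>
     goodP (Ob \<alpha>) (snd p) \<and> (\<forall>x\<in>S \<union> fst p. infinite (Aset \<alpha> x) \<longrightarrow> splits (snd p) (Aset \<alpha> x))"

definition ptsok :: "nat set set \<Rightarrow> nat set set \<Rightarrow> nat set \<Rightarrow> nat set set \<Rightarrow> bool" where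
  "ptsok S W \<alpha> pts \<longleftrightarrow> finite pts \<and> pts \<noteq> {} \<and> pts \<inter> W = {} \<and>
     (\<forall>G\<subseteq>pts. \<forall>F\<in>Fpow S. infinite (\<Inter>(G \<union> F))) \<and>
     (\<exists>x\<in>pts. card \<alpha> \<notin> x) \<and>
     (\<exists>F. finite F \<and> F \<noteq> {} \<and> F \<subseteq> S \<union> pts \<and> (\<Inter>F \<inter> \<alpha> = {} \<or> \<Inter>F \<inter> - \<alpha> = {}))"

lemma small_Hs: "small S \<Longrightarrow> small (Hs S)"
  unfolding Hs_def by (rule small_image, rule small_Fpow)

lemma Inter_Un_eq: "\<Inter>(G \<union> F) = \<Inter>G \<inter> \<Inter>F"
  by auto

context addM_hyp
begin

lemma meager_UN_small:
  assumes "small I" "\<And>i. i \<in> I \<Longrightarrow> meager (A i)"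
  shows "meager (\<Union>i\<in>I. A i)"
proof (rule small_meager_Union)
  show "small (A ` I)" by (rule small_image[OF assms(1)])
next
  fix M assume "M \<in> A ` I"
  then obtain i where "i \<in> I" "M = A i" by blast
  thus "meager M" using assms(2) by simp
qed

lemma ptsok_exists:
  assumes S: "small S" and W: "meager W" and iv: "inv S"
  shows "\<exists>pts. ptsok S W \<alpha> pts"
proof -
  have Hinf: "h \<in> Hs S \<Longrightarrow> infinite h" for h using iv unfolding inv_def Hs_def by blast
  have smH: "small (Hs S)" by (rule small_Hs[OF S])
  have finh: "meager {x. finite (x \<inter> h)}" if "h \<in> Hs S" for h
  proof -
    have "{x. finite (x \<inter> h)} = {P. finite (h \<inter> P)}" by (simp add: Int_commute)
    thus ?thesis using meager_fin_inter[OF Hinf[OF that]] by simp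
  qed
  show ?thesis
  proof (cases "\<exists>F\<in>Fpow S. finite (\<Inter>F \<inter> \<alpha>) \<or> finite (\<Inter>F \<inter> - \<alpha>)")
    case True
    then obtain F0 Q where F0: "F0 \<in> Fpow S" "finite (\<Inter>F0 \<inter> Q)" "Q = \<alpha> \<or> Q = - \<alpha>" by blast
    define E where "E = (\<Inter>F0 \<inter> Q) \<union> {card \<alpha>}"
    define W' where "W' = W \<union> (\<Union>h\<in>Hs S. {x. finite (x \<inter> h)})"
    have "meager W'" unfolding W'_def
      by (rule meager_Un[OF W meager_UN_small[OF smH finh]])
    moreover have "finite E" using F0(2) by (simp add: E_def)
    ultimately obtain x where x: "x \<inter> E = {}" "x \<notin> W'" using avoid_finite_exists by blast
    have xW: "x \<notin> W" using x(2) unfolding W'_def by blast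
    have xh: "infinite (x \<inter> h)" if "h \<in> Hs S" for h
    proof
      assume "finite (x \<inter> h)"
      hence "x \<in> (\<Union>h\<in>Hs S. {x. finite (x \<inter> h)})" using that by blast
      thus False using x(2) unfolding W'_def by blast
    qed
    have "ptsok S W \<alpha> {x}" unfolding ptsok_def
    proof (intro conjI)
      show "finite {x}" "{x} \<noteq> {}" by simp_all
      show "{x} \<inter> W = {}" using xW by simp
      show "\<forall>G\<subseteq>{x}. \<forall>F\<in>Fpow S. infinite (\<Inter>(G \<union> F))"
      proof (intro allI impI ballI)
        fix G F assume G: "G \<subseteq> {x}" and F: "F \<in> Fpow S"
        have hF: "\<Inter>F \<in> Hs S" using F by (simp add: Hs_def)
        show "infinite (\<Inter>(G \<union> F))"
        proof (cases "G = {}")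
          case True thus ?thesis using Hinf[OF hF] by simp
        next
          case False
          hence "G = {x}" using G by blast
          hence "\<Inter>(G \<union> F) = x \<inter> \<Inter>F" by auto
          thus ?thesis using xh[OF hF] by simp
        qed
      qed
      show "\<exists>y\<in>{x}. card \<alpha> \<notin> y" using x(1) by (auto simp: E_def)
      show "\<exists>F. finite F \<and> F \<noteq> {} \<and> F \<subseteq> S \<union> {x} \<and> (\<Inter>F \<inter> \<alpha> = {} \<or> \<Inter>F \<inter> - \<alpha> = {})"
      proof (intro exI conjI)
        show "finite (insert x F0)" using F0(1) by (simp add: Fpow_def)
        show "insert x F0 \<noteq> {}" by simp
        show "insert x F0 \<subseteq> S \<union> {x}" using F0(1) by (auto simp: Fpow_def)
        have "\<Inter>(insert x F0) \<inter> Q = x \<inter> (\<Inter>F0 \<inter> Q)" by auto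
        also have "\<dots> = {}" using x(1) by (auto simp: E_def)
        finally show "\<Inter>(insert x F0) \<inter> \<alpha> = {} \<or> \<Inter>(insert x F0) \<inter> - \<alpha> = {}" using F0(3) by blast
      qed
    qed
    thus ?thesis by blast
  next
    case False
    have BI: "infinite (h - \<alpha>)" if hH: "h \<in> Hs S" for h
    proof -
      obtain F where F: "F \<in> Fpow S" "h = \<Inter>F" using hH unfolding Hs_def by blast
      hence "infinite (\<Inter>F \<inter> - \<alpha>)" using False by blast
      thus ?thesis using F(2) by (simp add: Diff_eq)
    qed
    define f where "f = fpair \<alpha>"
    define W1 where "W1 = (\<Union>h\<in>Hs S. f -` {x. finite (x \<inter> h)})"
    define W2 where "W2 = (\<Union>h\<in>Hs S. gpair -` {x. finite (x \<inter> h)})"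
    define W3 where "W3 = (\<Union>h\<in>Hs S. {z. finite (f z \<inter> gpair z \<inter> h)})"
    have m1: "meager W1" unfolding W1_def f_def
      by (rule meager_UN_small[OF smH]) (rule meager_fpair[OF finh])
    have m2: "meager W2" unfolding W2_def
      by (rule meager_UN_small[OF smH]) (rule meager_gpair[OF finh])
    have m3: "meager W3" unfolding W3_def f_def
      by (rule meager_UN_small[OF smH]) (rule meager_pair_fin[OF BI])
    have m0: "meager (f -` W \<union> gpair -` W)" unfolding f_def
      by (rule meager_Un[OF meager_fpair[OF W] meager_gpair[OF W]])
    have "meager ((f -` W \<union> gpair -` W) \<union> (W1 \<union> (W2 \<union> W3)))"
      by (rule meager_Un[OF m0 meager_Un[OF m1 meager_Un[OF m2 m3]]])
    then obtain z where z: "z \<inter> {2 * card \<alpha>} = {}" "z \<notin> (f -` W \<union> gpair -` W) \<union> (W1 \<union> (W2 \<union> W3))"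
      using avoid_finite_exists[of "{2 * card \<alpha>}"] by blast
    define x where "x = f z"
    define y where "y = gpair z"
    have xW: "x \<notin> W" and yW: "y \<notin> W" using z(2) unfolding x_def y_def by blast+
    have xh: "infinite (x \<inter> h)" if "h \<in> Hs S" for h
    proof
      assume "finite (x \<inter> h)"
      hence "z \<in> W1" unfolding W1_def x_def using that by blast
      thus False using z(2) by blast
    qed
    have yh: "infinite (y \<inter> h)" if "h \<in> Hs S" for h
    proof
      assume "finite (y \<inter> h)"
      hence "z \<in> W2" unfolding W2_def y_def using that by blast
      thus False using z(2) by blast
    qed
    have xyh: "infinite (x \<inter> y \<inter> h)" if "h \<in> Hs S" for h
    proof
      assume "finite (x \<inter> y \<inter> h)"
      hence "z \<in> W3" unfolding W3_def x_def y_def using that by blast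
      thus False using z(2) by blast
    qed
    have "ptsok S W \<alpha> {x, y}" unfolding ptsok_def
    proof (intro conjI)
      show "finite {x, y}" "{x, y} \<noteq> {}" by simp_all
      show "{x, y} \<inter> W = {}" using xW yW by simp
      show "\<forall>G\<subseteq>{x, y}. \<forall>F\<in>Fpow S. infinite (\<Inter>(G \<union> F))"
      proof (intro allI impI ballI)
        fix G F assume G: "G \<subseteq> {x, y}" and F: "F \<in> Fpow S"
        have hF: "\<Inter>F \<in> Hs S" using F by (simp add: Hs_def)
        have "G = {} \<or> G = {x} \<or> G = {y} \<or> G = {x, y}" using G by blast
        thus "infinite (\<Inter>(G \<union> F))"
        proof (elim disjE)
          assume "G = {}" thus ?thesis using Hinf[OF hF] by simp
        next
          assume "G = {x}"
          hence "\<Inter>(G \<union> F) = x \<inter> \<Inter>F" by auto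
          thus ?thesis using xh[OF hF] by simp
        next
          assume "G = {y}"
          hence "\<Inter>(G \<union> F) = y \<inter> \<Inter>F" by auto
          thus ?thesis using yh[OF hF] by simp
        next
          assume "G = {x, y}"
          hence "\<Inter>(G \<union> F) = x \<inter> y \<inter> \<Inter>F" by auto
          thus ?thesis using xyh[OF hF] by simp
        qed
      qed
      show "\<exists>w\<in>{x, y}. card \<alpha> \<notin> w"
      proof -
        have "card \<alpha> \<notin> x" using z(1) by (auto simp: x_def f_def fpair_def)
        thus ?thesis by blast
      qed
      show "\<exists>F. finite F \<and> F \<noteq> {} \<and> F \<subseteq> S \<union> {x, y} \<and> (\<Inter>F \<inter> \<alpha> = {} \<or> \<Inter>F \<inter> - \<alpha> = {})"
      proof (intro exI conjI)
        show "finite {x, y}" "{x, y} \<noteq> {}" "{x, y} \<subseteq> S \<union> {x, y}" by auto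
        have "\<Inter>{x, y} \<inter> \<alpha> = fpair \<alpha> z \<inter> gpair z \<inter> \<alpha>" by (auto simp: x_def y_def f_def)
        also have "\<dots> = {}" by (rule fpair_gpair_disj)
        finally show "\<Inter>{x, y} \<inter> \<alpha> = {} \<or> \<Inter>{x, y} \<inter> - \<alpha> = {}" by blast
      qed
    qed
    thus ?thesis by blast
  qed
qed

lemma spec_exists:
  assumes S: "small S" and W: "meager W" and iv: "inv S"
  shows "\<exists>p. spec S W \<alpha> p"
proof -
  obtain pts where pts: "ptsok S W \<alpha> pts" using ptsok_exists[OF S W iv] by blast
  have "finite pts" using pts unfolding ptsok_def by blast
  hence smX: "small (S \<union> pts)" by (rule small_Un[OF S small_finite])
  define X where "X = {x\<in>S \<union> pts. infinite (Aset \<alpha> x)}"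
  have smX': "small X" unfolding X_def by (rule small_subset[OF smX]) blast
  define B where "B = {P. \<not> goodP (Ob \<alpha>) P} \<union> (\<Union>x\<in>X. {P. \<not> splits P (Aset \<alpha> x)})"
  have "meager B" unfolding B_def
  proof (rule meager_Un[OF meager_not_goodP meager_UN_small[OF smX']])
    fix x assume "x \<in> X"
    hence "infinite (Aset \<alpha> x)" unfolding X_def by blast
    thus "meager {P. \<not> splits P (Aset \<alpha> x)}" by (rule meager_not_splits)
  qed
  then obtain P where P: "P \<notin> B" using baire[of B "{}" 0] by blast
  have g: "goodP (Ob \<alpha>) P" using P unfolding B_def by blast
  have sp: "\<forall>x\<in>S \<union> pts. infinite (Aset \<alpha> x) \<longrightarrow> splits P (Aset \<alpha> x)"
  proof (intro ballI impI)
    fix x assume "x \<in> S \<union> pts" "infinite (Aset \<alpha> x)"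
    hence "x \<in> X" unfolding X_def by blast
    thus "splits P (Aset \<alpha> x)" using P unfolding B_def by blast
  qed
  have "spec S W \<alpha> (pts, P)"
    using pts g sp unfolding spec_def ptsok_def by simp
  thus ?thesis by blast
qed

end



abbreviation rr :: "nat set rel" where "rr \<equiv> |UNIV :: nat set set|"

definition Sof :: "(nat set \<Rightarrow> nat set set \<times> nat set) \<Rightarrow> nat set \<Rightarrow> nat set set" where
  "Sof g \<alpha> = (\<Union>\<gamma>\<in>underS rr \<alpha>. fst (g \<gamma>))"

definition Wst :: "(nat set \<Rightarrow> nat set set \<times> nat set) \<Rightarrow> nat set \<Rightarrow> nat set set" where
  "Wst g \<gamma> = dm \<gamma> \<union> Mb \<gamma> \<union> Nset (Ob \<gamma>) (snd (g \<gamma>)) \<union> fst (g \<gamma>)"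

definition Wof :: "(nat set \<Rightarrow> nat set set \<times> nat set) \<Rightarrow> nat set \<Rightarrow> nat set set" where
  "Wof g \<alpha> = (\<Union>\<gamma>\<in>underS rr \<alpha>. Wst g \<gamma>)"

definition step :: "(nat set \<Rightarrow> nat set set \<times> nat set) \<Rightarrow> nat set \<Rightarrow> nat set set \<times> nat set" where
  "step g \<alpha> = (SOME p. spec (Sof g \<alpha>) (Wof g \<alpha>) \<alpha> p)"

definition gg :: "nat set \<Rightarrow> nat set set \<times> nat set" where
  "gg = wo_rel.worec rr step"

lemma wo_rr: "wo_rel rr"
  by (simp add: wo_rel_def card_of_Well_order)

lemma adm_step: "wo_rel.adm_wo rr step"
  unfolding wo_rel.adm_wo_def[OF wo_rr]
proof (intro allI impI)
  fix f g :: "nat set \<Rightarrow> nat set set \<times> nat set" and x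
  assume eq: "\<forall>y\<in>underS rr x. f y = g y"
  have "Sof f x = Sof g x" unfolding Sof_def using eq by simp
  moreover have "Wof f x = Wof g x" unfolding Wof_def Wst_def using eq by simp
  ultimately show "step f x = step g x" unfolding step_def by simp
qed

lemma gg_eq: "gg \<alpha> = step gg \<alpha>"
proof -
  have "gg = step gg" unfolding gg_def by (rule wo_rel.worec_fixpoint[OF wo_rr adm_step])
  thus ?thesis by (rule fun_cong)
qed

lemma small_underS: "small (underS rr \<alpha>)"
  unfolding small_def using card_of_underS[OF card_of_Card_order, of \<alpha> "UNIV :: nat set set"]
  by (simp add: Field_card_of)

lemma underS_iff: "\<gamma> \<in> underS rr \<alpha> \<longleftrightarrow> \<gamma> \<noteq> \<alpha> \<and> (\<gamma>, \<alpha>) \<in> rr"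
  by (simp add: underS_def)

lemma rr_total: "\<alpha> \<noteq> \<beta> \<Longrightarrow> \<alpha> \<in> underS rr \<beta> \<or> \<beta> \<in> underS rr \<alpha>"
  using wo_rel.TOTALS[OF wo_rr] by (simp add: underS_iff Field_card_of)

lemma rr_trans: "\<gamma> \<in> underS rr \<beta> \<Longrightarrow> \<beta> \<in> underS rr \<alpha> \<Longrightarrow> \<gamma> \<in> underS rr \<alpha>"
proof -
  assume a: "\<gamma> \<in> underS rr \<beta>" "\<beta> \<in> underS rr \<alpha>"
  hence r: "(\<gamma>, \<beta>) \<in> rr" "(\<beta>, \<alpha>) \<in> rr" "\<gamma> \<noteq> \<beta>" "\<beta> \<noteq> \<alpha>" by (auto simp: underS_iff)
  have "(\<gamma>, \<alpha>) \<in> rr" using wo_rel.TRANS[OF wo_rr] r(1,2) unfolding trans_def by blast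
  moreover have "\<gamma> \<noteq> \<alpha>"
  proof
    assume "\<gamma> = \<alpha>"
    hence "(\<alpha>, \<beta>) \<in> rr" using r(1) by simp
    hence "\<alpha> = \<beta>" using r(2) wo_rel.ANTISYM[OF wo_rr] unfolding antisym_def by blast
    thus False using r(4) by simp
  qed
  ultimately show ?thesis by (simp add: underS_iff)
qed

lemma rr_max: "finite X \<Longrightarrow> X \<noteq> {} \<Longrightarrow> \<exists>\<beta>\<in>X. \<forall>\<gamma>\<in>X. \<gamma> = \<beta> \<or> \<gamma> \<in> underS rr \<beta>"
proof (induction X rule: finite_ne_induct)
  case (singleton x)
  thus ?case by simp
next
  case (insert x F)
  then obtain \<beta> where \<beta>: "\<beta> \<in> F" "\<forall>\<gamma>\<in>F. \<gamma> = \<beta> \<or> \<gamma> \<in> underS rr \<beta>" by blast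
  show ?case
  proof (cases "x = \<beta> \<or> x \<in> underS rr \<beta>")
    case True
    thus ?thesis using \<beta> by blast
  next
    case False
    hence xb: "\<beta> \<in> underS rr x" using rr_total[of x \<beta>] by blast
    have "\<forall>\<gamma>\<in>insert x F. \<gamma> = x \<or> \<gamma> \<in> underS rr x"
    proof
      fix \<gamma> assume "\<gamma> \<in> insert x F"
      hence "\<gamma> = x \<or> \<gamma> = \<beta> \<or> \<gamma> \<in> underS rr \<beta>" using \<beta>(2) by blast
      thus "\<gamma> = x \<or> \<gamma> \<in> underS rr x" using xb rr_trans by blast
    qed
    thus ?thesis by blast
  qed
qed

lemma chain_inv:
  assumes sp: "\<forall>\<beta>\<in>A. spec (Sof gg \<beta>) (Wof gg \<beta>) \<beta> (gg \<beta>)"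
    and fin: "finite F" and sub: "F \<subseteq> (\<Union>\<beta>\<in>A. fst (gg \<beta>))"
  shows "infinite (\<Inter>F)"
proof (cases "F = {}")
  case True thus ?thesis by simp
next
  case False
  have "\<forall>x\<in>F. \<exists>\<beta>. \<beta> \<in> A \<and> x \<in> fst (gg \<beta>)" using sub by blast
  then obtain st where st: "\<forall>x\<in>F. st x \<in> A \<and> x \<in> fst (gg (st x))" by (rule bchoice[THEN exE]) blast
  obtain \<beta> where \<beta>: "\<beta> \<in> st ` F" "\<forall>\<gamma>\<in>st ` F. \<gamma> = \<beta> \<or> \<gamma> \<in> underS rr \<beta>"
    using rr_max[of "st ` F"] fin False by blast
  have \<beta>A: "\<beta> \<in> A" using \<beta>(1) st by blast
  define G where "G = F \<inter> fst (gg \<beta>)"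
  define F' where "F' = F - fst (gg \<beta>)"
  have "F' \<subseteq> Sof gg \<beta>"
  proof
    fix x assume x: "x \<in> F'"
    hence xF: "x \<in> F" and xn: "x \<notin> fst (gg \<beta>)" by (auto simp: F'_def)
    have "st x \<noteq> \<beta>" using st xF xn by metis
    hence "st x \<in> underS rr \<beta>" using \<beta>(2) xF by blast
    thus "x \<in> Sof gg \<beta>" unfolding Sof_def using st xF by blast
  qed
  hence "F' \<in> Fpow (Sof gg \<beta>)" using fin by (auto simp: F'_def Fpow_def)
  moreover have "G \<subseteq> fst (gg \<beta>)" by (simp add: G_def)
  ultimately have "infinite (\<Inter>(G \<union> F'))" using sp \<beta>A unfolding spec_def by blast
  moreover have "G \<union> F' = F" by (auto simp: G_def F'_def)
  ultimately show ?thesis by simp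
qed

context addM_hyp
begin

lemma gg_spec: "spec (Sof gg \<alpha>) (Wof gg \<alpha>) \<alpha> (gg \<alpha>)"
proof (induction \<alpha> rule: wo_rel.well_order_induct[OF wo_rr])
  case (1 x)
  have IH: "\<forall>\<gamma>\<in>underS rr x. spec (Sof gg \<gamma>) (Wof gg \<gamma>) \<gamma> (gg \<gamma>)"
    using 1 by (simp add: underS_iff)
  have S: "small (Sof gg x)" unfolding Sof_def
    by (rule small_UN_finite[OF small_underS]) (use IH in \<open>simp add: spec_def\<close>)
  have W: "meager (Wof gg x)" unfolding Wof_def
  proof (rule meager_UN_small[OF small_underS])
    fix \<gamma> assume \<gamma>: "\<gamma> \<in> underS rr x"
    have sg: "spec (Sof gg \<gamma>) (Wof gg \<gamma>) \<gamma> (gg \<gamma>)" using IH \<gamma> by blast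
    have "meager (Nset (Ob \<gamma>) (snd (gg \<gamma>)))"
      by (rule meager_Nset[OF Ob_open]) (use sg in \<open>simp add: spec_def\<close>)
    moreover have "meager (fst (gg \<gamma>))"
      by (rule meager_countable, rule countable_finite) (use sg in \<open>simp add: spec_def\<close>)
    ultimately show "meager (Wst gg \<gamma>)" unfolding Wst_def
      by (intro meager_Un dm_meager Mb_meager)
  qed
  have iv: "inv (Sof gg x)" unfolding inv_def
  proof
    fix F assume "F \<in> Fpow (Sof gg x)"
    hence "finite F" "F \<subseteq> (\<Union>\<gamma>\<in>underS rr x. fst (gg \<gamma>))" by (auto simp: Fpow_def Sof_def)
    thus "infinite (\<Inter>F)" using chain_inv[OF IH] by blast
  qed
  have "\<exists>p. spec (Sof gg x) (Wof gg x) x p" by (rule spec_exists[OF S W iv])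
  hence "spec (Sof gg x) (Wof gg x) x (step gg x)" unfolding step_def by (rule someI_ex)
  thus ?case using gg_eq[of x] by simp
qed

end



definition LL :: "nat set set" where
  "LL = (\<Union>\<alpha>. fst (gg \<alpha>))"

lemma clopen_bit: "clopen_in X ({x. n \<in> x} \<inter> X)"
proof -
  have o1: "openin cantor_top {x. n \<in> x}"
    unfolding openin_cantor_iff
  proof
    fix y assume "y \<in> {x. n \<in> x}"
    hence "cyl y (Suc n) \<subseteq> {x. n \<in> x}" by (auto simp: cyl_def)
    thus "\<exists>m. cyl y m \<subseteq> {x. n \<in> x}" by blast
  qed
  have o2: "openin cantor_top {x. n \<notin> x}"
    unfolding openin_cantor_iff
  proof
    fix y assume "y \<in> {x. n \<notin> x}"
    hence "cyl y (Suc n) \<subseteq> {x. n \<notin> x}" by (auto simp: cyl_def)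
    thus "\<exists>m. cyl y m \<subseteq> {x. n \<notin> x}" by blast
  qed
  have "topspace cantor_top - {x. n \<in> x} = {x. n \<notin> x}" by auto
  hence c1: "closedin cantor_top {x. n \<in> x}" unfolding closedin_def using o2 by simp
  show ?thesis unfolding clopen_in_def openin_subtopology closedin_subtopology
    using o1 c1 by blast
qed

context addM_hyp
begin

lemma pts_not_W: "x \<in> fst (gg \<alpha>) \<Longrightarrow> x \<notin> Wof gg \<alpha>"
  using gg_spec[of \<alpha>] unfolding spec_def by blast

lemma Wst_sub: "\<gamma> \<in> underS rr \<alpha> \<Longrightarrow> Wst gg \<gamma> \<subseteq> Wof gg \<alpha>"
  unfolding Wof_def by blast

lemma LL_inv: "finite F \<Longrightarrow> F \<subseteq> LL \<Longrightarrow> infinite (\<Inter>F)"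
  using chain_inv[of UNIV F] gg_spec unfolding LL_def by blast

lemma LL_inf: "x \<in> LL \<Longrightarrow> infinite x"
  using LL_inv[of "{x}"] by simp

lemma pts_ne: "fst (gg \<alpha>) \<noteq> {}"
  using gg_spec[of \<alpha>] unfolding spec_def by blast

lemma LL_big: "|UNIV :: nat set set| \<le>o |LL|"
proof -
  define z where "z \<alpha> = (SOME x. x \<in> fst (gg \<alpha>))" for \<alpha>
  have zin: "z \<alpha> \<in> fst (gg \<alpha>)" for \<alpha>
    unfolding z_def using pts_ne[of \<alpha>] by (simp add: some_in_eq)
  have zne: "z \<alpha> \<noteq> z \<beta>" if "\<beta> \<in> underS rr \<alpha>" for \<alpha> \<beta>
  proof
    assume eq: "z \<alpha> = z \<beta>"
    have "z \<beta> \<in> Wst gg \<beta>" using zin[of \<beta>] unfolding Wst_def by blast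
    hence "z \<beta> \<in> Wof gg \<alpha>" by (rule subsetD[OF Wst_sub[OF that]])
    hence "z \<alpha> \<in> Wof gg \<alpha>" using eq by simp
    thus False using pts_not_W[OF zin[of \<alpha>]] by blast
  qed
  have "inj z"
  proof (rule injI)
    fix \<alpha> \<beta> assume eq: "z \<alpha> = z \<beta>"
    show "\<alpha> = \<beta>"
    proof (rule ccontr)
      assume "\<alpha> \<noteq> \<beta>"
      hence "\<alpha> \<in> underS rr \<beta> \<or> \<beta> \<in> underS rr \<alpha>" by (rule rr_total)
      thus False using zne eq by metis
    qed
  qed
  moreover have "z ` UNIV \<subseteq> LL" unfolding LL_def using zin by blast
  ultimately show ?thesis using card_of_ordLeq[of "UNIV :: nat set set" LL] by blast
qed

lemma LL_meager: "meager M \<Longrightarrow> small (LL \<inter> M)"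
proof -
  assume "meager M"
  then obtain \<beta> where \<beta>: "M \<subseteq> dm \<beta>" using dm_cover by blast
  have "LL \<inter> M \<subseteq> (\<Union>\<gamma>\<in>insert \<beta> (underS rr \<beta>). fst (gg \<gamma>))"
  proof
    fix x assume x: "x \<in> LL \<inter> M"
    then obtain \<alpha> where \<alpha>: "x \<in> fst (gg \<alpha>)" unfolding LL_def by blast
    have "\<alpha> \<in> insert \<beta> (underS rr \<beta>)"
    proof (rule ccontr)
      assume "\<alpha> \<notin> insert \<beta> (underS rr \<beta>)"
      hence "\<beta> \<in> underS rr \<alpha>" using rr_total[of \<alpha> \<beta>] by blast
      hence "dm \<beta> \<subseteq> Wof gg \<alpha>" using Wst_sub[of \<beta> \<alpha>] unfolding Wst_def by blast
      hence "x \<in> Wof gg \<alpha>" using x \<beta> by blast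
      thus False using pts_not_W[OF \<alpha>] by blast
    qed
    thus "x \<in> (\<Union>\<gamma>\<in>insert \<beta> (underS rr \<beta>). fst (gg \<gamma>))" using \<alpha> by blast
  qed
  moreover have "small (\<Union>\<gamma>\<in>insert \<beta> (underS rr \<beta>). fst (gg \<gamma>))"
  proof (rule small_UN_finite)
    show "small (insert \<beta> (underS rr \<beta>))"
      using small_Un[OF small_finite[of "{\<beta>}"] small_underS[of \<beta>]] by simp
  next
    fix \<gamma> show "finite (fst (gg \<gamma>))" using gg_spec[of \<gamma>] unfolding spec_def by blast
  qed
  ultimately show ?thesis by (rule small_subset[rotated])
qed

lemma LL_luzin:
  assumes K: "is_addM K"
  shows "luzin K LL"
proof -
  obtain F1 where F1: "F1 \<in> nonmeager_unions" "|F1| =o |UNIV :: nat set set|"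
    "\<forall>F\<in>nonmeager_unions. |UNIV :: nat set set| \<le>o |F|"
    using addM unfolding is_addM_def by blast
  obtain F2 where F2: "F2 \<in> nonmeager_unions" "|F2| =o |K|" "\<forall>F\<in>nonmeager_unions. |K| \<le>o |F|"
    using K unfolding is_addM_def by blast
  have KU: "|K| \<le>o |UNIV :: nat set set|"
    using F2(3) F1(1) F1(2) ordLeq_ordIso_trans by blast
  have UK: "|UNIV :: nat set set| \<le>o |K|"
    using F1(3) F2(1) F2(2) ordLeq_ordIso_trans by blast
  show ?thesis unfolding luzin_def
  proof (intro conjI allI impI)
    show "|K| \<le>o |LL|" by (rule ordLeq_transitive[OF KU LL_big])
  next
    fix M assume "meager M"
    hence "|LL \<inter> M| <o |UNIV :: nat set set|" using LL_meager unfolding small_def by blast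
    thus "|LL \<inter> M| <o |K|" using UK by (rule ordLess_ordLeq_trans)
  qed
qed

lemma LL_splitB: "Split B_Lambda B_Lambda LL"
  unfolding Split_def
proof
  fix \<U> assume U: "\<U> \<in> B_Lambda LL"
  hence cU: "countable \<U>" and lc: "large_cover LL \<U>" and bU: "\<U> \<subseteq> borel_in LL"
    unfolding B_Lambda_def by auto
  have cov: "\<forall>U\<in>\<U>. U \<subseteq> LL" "\<Union>\<U> = LL" "\<forall>U\<in>\<U>. \<not> LL \<subseteq> U"
    using lc unfolding large_cover_def is_cover_def by auto
  have inf: "\<forall>x\<in>LL. infinite {U\<in>\<U>. x \<in> U}" using lc unfolding large_cover_def by blast
  obtain x0 where x0: "x0 \<in> LL" using pts_ne[of "{}"] unfolding LL_def by blast
  have "infinite \<U>" using inf x0 infinite_super[of "{U\<in>\<U>. x0 \<in> U}" \<U>] by blast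
  define u where "u = from_nat_into \<U>"
  have bij: "bij_betw u UNIV \<U>" unfolding u_def by (rule bij_betw_from_nat_into[OF cU \<open>infinite \<U>\<close>])
  hence inju: "inj u" and ranu: "range u = \<U>" by (auto simp: bij_betw_def)
  have "\<forall>n. \<exists>c. u n = interp c \<inter> LL"
  proof
    fix n have "u n \<in> borel_in LL" using ranu bU by blast
    thus "\<exists>c. u n = interp c \<inter> LL" by (rule borel_trace)
  qed
  from choice[OF this] obtain cs where cs: "\<forall>n. u n = interp (cs n) \<inter> LL" by blast
  obtain \<beta> where \<beta>: "dbor \<beta> = cs" using dbor_surj by (metis surjD)
  define P where "P = snd (gg \<beta>)"
  define A where "A x = {n. x \<in> u n}" for x
  have AA: "A x = Aset \<beta> x" if "x \<in> LL" for x
    unfolding A_def Aset_def using cs \<beta> that by auto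
  have Aimg: "{U\<in>\<U>. x \<in> U} = u ` A x" for x
    unfolding A_def using ranu by blast
  have Ainf: "infinite (A x)" if "x \<in> LL" for x
  proof
    assume "finite (A x)"
    hence "finite {U\<in>\<U>. x \<in> U}" using Aimg by simp
    thus False using inf that by blast
  qed
  have spl: "splits P (A x)" if xL: "x \<in> LL" for x
  proof -
    obtain \<alpha> where \<alpha>: "x \<in> fst (gg \<alpha>)" using xL unfolding LL_def by blast
    have sb: "spec (Sof gg \<beta>) (Wof gg \<beta>) \<beta> (gg \<beta>)" by (rule gg_spec)
    show ?thesis
    proof (cases "\<alpha> = \<beta> \<or> \<alpha> \<in> underS rr \<beta>")
      case True
      hence "x \<in> Sof gg \<beta> \<union> fst (gg \<beta>)" using \<alpha> unfolding Sof_def by blast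
      moreover have "infinite (Aset \<beta> x)" using Ainf[OF xL] AA[OF xL] by simp
      ultimately have "splits P (Aset \<beta> x)" using sb unfolding spec_def P_def by blast
      thus ?thesis using AA[OF xL] by simp
    next
      case False
      hence "\<beta> \<in> underS rr \<alpha>" using rr_total[of \<alpha> \<beta>] by blast
      hence "x \<notin> Wst gg \<beta>" using Wst_sub pts_not_W[OF \<alpha>] by blast
      hence xM: "x \<notin> Mb \<beta>" and xN: "x \<notin> Nset (Ob \<beta>) P" unfolding Wst_def P_def by auto
      have eqA: "A x = {n. x \<in> Ob \<beta> n}" using AA[OF xL] Aset_Ob[OF xM] by simp
      hence "x \<in> Dset (Ob \<beta>)" using Ainf[OF xL] by (simp add: Dset_def)
      thus ?thesis using xN eqA unfolding Nset_def by auto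
    qed
  qed
  have sub: "u ` Q \<in> B_Lambda LL" if Q: "\<forall>x\<in>LL. infinite (A x \<inter> Q)" for Q
  proof -
    have "countable (u ` Q)" by simp
    moreover have "u ` Q \<subseteq> borel_in LL" using ranu bU by blast
    moreover have "large_cover LL (u ` Q)"
      unfolding large_cover_def is_cover_def
    proof (intro conjI ballI)
      fix U assume "U \<in> u ` Q" thus "U \<subseteq> LL" using ranu cov(1) by blast
    next
      show "\<Union>(u ` Q) = LL"
      proof
        show "\<Union>(u ` Q) \<subseteq> LL" using ranu cov(1) by blast
      next
        show "LL \<subseteq> \<Union>(u ` Q)"
        proof
          fix x assume x: "x \<in> LL"
          hence "A x \<inter> Q \<noteq> {}" using Q by force
          then obtain n where "n \<in> Q" "x \<in> u n" unfolding A_def by blast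
          thus "x \<in> \<Union>(u ` Q)" by blast
        qed
      qed
    next
      fix U assume "U \<in> u ` Q" thus "\<not> LL \<subseteq> U" using ranu cov(3) by blast
    next
      fix x assume x: "x \<in> LL"
      have "{U \<in> u ` Q. x \<in> U} = u ` (A x \<inter> Q)" unfolding A_def by blast
      moreover have "infinite (u ` (A x \<inter> Q))"
        using Q x finite_image_iff[of u "A x \<inter> Q"] inj_on_subset[OF inju] by blast
      ultimately show "infinite {U \<in> u ` Q. x \<in> U}" by simp
    qed
    ultimately show ?thesis unfolding B_Lambda_def by blast
  qed
  have s1: "u ` P \<in> B_Lambda LL"
    by (rule sub) (use spl in \<open>simp add: splits_def\<close>)
  have s2: "u ` (- P) \<in> B_Lambda LL"
    by (rule sub) (use spl in \<open>simp add: splits_def Diff_eq\<close>)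
  have "u ` P \<union> u ` (- P) = \<U>" using ranu by blast
  moreover have "u ` P \<inter> u ` (- P) = {}" using inju by (auto simp: inj_def)
  ultimately show "\<exists>\<A> \<B>. \<A> \<union> \<B> = \<U> \<and> \<A> \<inter> \<B> = {} \<and> (\<exists>\<A>'\<subseteq>\<A>. \<A>' \<in> B_Lambda LL) \<and> (\<exists>\<B>'\<subseteq>\<B>. \<B>' \<in> B_Lambda LL)"
    using s1 s2 by blast
qed

lemma LL_not_splitC: "\<not> Split C_Omega C_Omega LL"
proof
  assume spl: "Split C_Omega C_Omega LL"
  define U where "U n = {x \<in> LL. n \<in> x}" for n
  define Cov where "Cov = range U"
  have "Cov \<in> C_Omega LL" unfolding C_Omega_def
  proof (intro CollectI conjI ballI)
    show "countable Cov" unfolding Cov_def by simp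
  next
    fix V assume "V \<in> Cov"
    then obtain n where "V = U n" unfolding Cov_def by blast
    have "U n = {x. n \<in> x} \<inter> LL" unfolding U_def by blast
    thus "clopen_in LL V" using clopen_bit \<open>V = U n\<close> by simp
  next
    show "omega_cover LL Cov" unfolding omega_cover_def is_cover_def
    proof (intro conjI allI impI ballI)
      fix V assume "V \<in> Cov" thus "V \<subseteq> LL" unfolding Cov_def U_def by blast
    next
      show "\<Union>Cov = LL"
      proof
        show "\<Union>Cov \<subseteq> LL" unfolding Cov_def U_def by blast
      next
        show "LL \<subseteq> \<Union>Cov"
        proof
          fix x assume x: "x \<in> LL"
          have "infinite x" using LL_inf x by blast
          hence "x \<noteq> {}" by (intro notI) simp
          then obtain n where "n \<in> x" by blast
          hence "x \<in> U n" using x unfolding U_def by blast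
          thus "x \<in> \<Union>Cov" unfolding Cov_def by blast
        qed
      qed
    next
      fix V assume "V \<in> Cov"
      then obtain n where V: "V = U n" unfolding Cov_def by blast
      have "\<exists>x\<in>fst (gg {..<n}). card {..<n} \<notin> x"
        using gg_spec[of "{..<n}"] unfolding spec_def by (elim conjE) assumption
      then obtain x where x: "x \<in> fst (gg {..<n})" "card {..<n} \<notin> x" by blast
      have "x \<in> LL" using x(1) unfolding LL_def by blast
      moreover have "x \<notin> U n" using x(2) unfolding U_def by simp
      ultimately show "\<not> LL \<subseteq> V" using V by blast
    next
      fix F assume F: "finite F \<and> F \<subseteq> LL"
      hence "infinite (\<Inter>F)" using LL_inv by blast
      have "\<Inter>F \<noteq> {}"
      proof
        assume "\<Inter>F = {}"
        thus False using \<open>infinite (\<Inter>F)\<close> by simp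
      qed
      then obtain n where n: "n \<in> \<Inter>F" by blast
      hence "F \<subseteq> U n" using F unfolding U_def by blast
      thus "\<exists>V\<in>Cov. F \<subseteq> V" unfolding Cov_def by blast
    qed
  qed
  hence "\<exists>\<A> \<B>. \<A> \<union> \<B> = Cov \<and> \<A> \<inter> \<B> = {} \<and> (\<exists>\<A>'\<subseteq>\<A>. \<A>' \<in> C_Omega LL) \<and> (\<exists>\<B>'\<subseteq>\<B>. \<B>' \<in> C_Omega LL)"
    by (rule bspec[OF spl[unfolded Split_def]])
  then obtain \<A> \<B> where AB: "\<A> \<union> \<B> = Cov" "\<A> \<inter> \<B> = {}" and
    A': "\<exists>\<A>'\<subseteq>\<A>. \<A>' \<in> C_Omega LL" and B': "\<exists>\<B>'\<subseteq>\<B>. \<B>' \<in> C_Omega LL"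
    by blast
  define P where "P = {n. U n \<in> \<A>}"
  have "\<exists>F. finite F \<and> F \<noteq> {} \<and> F \<subseteq> Sof gg P \<union> fst (gg P) \<and> (\<Inter>F \<inter> P = {} \<or> \<Inter>F \<inter> - P = {})"
    using gg_spec[of P] unfolding spec_def by (elim conjE) assumption
  then obtain F where F: "finite F" "F \<noteq> {}" "F \<subseteq> Sof gg P \<union> fst (gg P)" "\<Inter>F \<inter> P = {} \<or> \<Inter>F \<inter> - P = {}"
    by blast
  have FL: "F \<subseteq> LL" using F(3) unfolding Sof_def LL_def by blast
  show False
    using F(4)
  proof
    assume e: "\<Inter>F \<inter> P = {}"
    obtain \<A>' where "\<A>' \<subseteq> \<A>" "\<A>' \<in> C_Omega LL" using A' by blast
    hence "omega_cover LL \<A>'" unfolding C_Omega_def by blast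
    then obtain V where V: "V \<in> \<A>'" "F \<subseteq> V" using F(1) FL unfolding omega_cover_def by blast
    hence "V \<in> \<A>" using \<open>\<A>' \<subseteq> \<A>\<close> by blast
    hence "V \<in> Cov" using AB(1) by blast
    then obtain n where n: "V = U n" unfolding Cov_def by blast
    have "n \<in> P" using \<open>V \<in> \<A>\<close> n unfolding P_def by simp
    moreover have "n \<in> \<Inter>F" using V(2) n unfolding U_def by blast
    ultimately show False using e by blast
  next
    assume e: "\<Inter>F \<inter> - P = {}"
    obtain \<B>' where "\<B>' \<subseteq> \<B>" "\<B>' \<in> C_Omega LL" using B' by blast
    hence "omega_cover LL \<B>'" unfolding C_Omega_def by blast
    then obtain V where V: "V \<in> \<B>'" "F \<subseteq> V" using F(1) FL unfolding omega_cover_def by blast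
    hence "V \<in> \<B>" using \<open>\<B>' \<subseteq> \<B>\<close> by blast
    hence "V \<in> Cov" "V \<notin> \<A>" using AB by blast+
    then obtain n where n: "V = U n" unfolding Cov_def by blast
    have "n \<notin> P" using \<open>V \<notin> \<A>\<close> n unfolding P_def by simp
    moreover have "n \<in> \<Inter>F" using V(2) n unfolding U_def by blast
    ultimately show False using e by blast
  qed
qed

end

theorem theorem5p7:
  assumes "is_addM (UNIV :: nat set set)"
  shows "\<exists>L \<subseteq> infinite_subsets. (\<forall>K :: nat set set set. is_addM K \<longrightarrow> luzin K L)
           \<and> Split B_Lambda B_Lambda L \<and> \<not> Split C_Omega C_Omega L"
proof -
  interpret addM_hyp by (rule addM_hyp.intro[OF assms])
  have "LL \<subseteq> infinite_subsets" using LL_inf unfolding infinite_subsets_def by blast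
  moreover have "\<forall>K :: nat set set set. is_addM K \<longrightarrow> luzin K LL" using LL_luzin by blast
  ultimately show ?thesis using LL_splitB LL_not_splitC by blast
qed


end
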